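(* Let $k$ be a field of characteristic zero and $q\in k\setminus\{0\}$ not a root of unity. Let $f=a/d^m$ where $m\in\mathbb{N}$, $d\in k[x,y]$ is irreducible, and $a\in k(x)[y]$ is nonzero with $\deg_y(a)<\deg_y(d)$. Then $f$ is exact with respect to $(\Delta_{x,q},\Delta_y)$ if and only if $d\in k[y]$ and $a=\Delta_{x,q}(b)$ for some $b\in k(x)[y]$.
   Context: On $k(x,y)$: $\tau_{x,q}(f(x,y))=f(qx,y)$, $\sigma_y(f(x,y))=f(x,y+1)$, $\Delta_{x,q}=\tau_{x,q}-1$, $\Delta_y=\sigma_y-1$. A rational function $f$ is exact with respect to $(\Delta_{x,q},\Delta_y)$ if $f=\Delta_{x,q}(g)+\Delta_y(h)$ for some $g,h\in k(x,y)$. *)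

theory Defs
  imports "HOL-Computational_Algebra.Computational_Algebra"
begin

text \<open>Representation: k[x] = 'a poly, k(x) = 'a poly fract, k(x)[y] = 'a poly fract poly,
  k[x,y] = 'a poly poly (polynomials in y over k[x]),
  k(x,y) = ('a poly fract poly) fract (fraction field of k(x)[y]).\<close>

text \<open>Extension of a map on an integral domain to its fraction field
  (well defined for injective ring homomorphisms).\<close>
definition fract_lift :: "('b::idom \<Rightarrow> 'b) \<Rightarrow> 'b fract \<Rightarrow> 'b fract" where
  "fract_lift h f = (SOME r. \<forall>n d. d \<noteq> 0 \<longrightarrow> f = Fract n d \<longrightarrow> r = Fract (h n) (h d))"

definition tau_x :: "'a::field \<Rightarrow> 'a poly fract \<Rightarrow> 'a poly fract" where
  "tau_x q = fract_lift (\<lambda>p. p \<circ>\<^sub>p [:0, q:])"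

definition tau_xy :: "'a::field \<Rightarrow> 'a poly fract poly \<Rightarrow> 'a poly fract poly" where
  "tau_xy q P = map_poly (tau_x q) P"

definition tauK :: "'a::field \<Rightarrow> 'a poly fract poly fract \<Rightarrow> 'a poly fract poly fract" where
  "tauK q = fract_lift (tau_xy q)"

definition sigK :: "'a::field poly fract poly fract \<Rightarrow> 'a poly fract poly fract" where
  "sigK = fract_lift (\<lambda>P. P \<circ>\<^sub>p [:1, 1:])"

definition DeltaX :: "'a::field \<Rightarrow> 'a poly fract poly fract \<Rightarrow> 'a poly fract poly fract" where
  "DeltaX q f = tauK q f - f"

definition DeltaY :: "'a::field poly fract poly fract \<Rightarrow> 'a poly fract poly fract" where
  "DeltaY f = sigK f - f"

definition exact :: "'a::field \<Rightarrow> 'a poly fract poly fract \<Rightarrow> bool" where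
  "exact q f \<longleftrightarrow> (\<exists>g h. f = DeltaX q g + DeltaY h)"

definition emb_xy :: "'a::field poly poly \<Rightarrow> 'a poly fract poly" where
  "emb_xy d = map_poly to_fract d"

end

theory Submission
  imports Defs "HOL-Library.Groups_Big_Fun" "HOL-Library.Product_Plus"
begin

definition inj_ring_hom :: "('b::comm_ring_1 \<Rightarrow> 'c::comm_ring_1) \<Rightarrow> bool" where
  "inj_ring_hom h \<longleftrightarrow> (\<forall>x y. h (x + y) = h x + h y) \<and> (\<forall>x y. h (x * y) = h x * h y)
     \<and> h 1 = 1 \<and> (\<forall>x. h x = 0 \<longrightarrow> x = 0)"

lemma irh_add: "inj_ring_hom h \<Longrightarrow> h (x + y) = h x + h y"
  by (simp add: inj_ring_hom_def)
lemma irh_mult: "inj_ring_hom h \<Longrightarrow> h (x * y) = h x * h y"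
  by (simp add: inj_ring_hom_def)
lemma irh_1: "inj_ring_hom h \<Longrightarrow> h 1 = 1"
  by (simp add: inj_ring_hom_def)
lemma irh_0: "inj_ring_hom h \<Longrightarrow> h 0 = 0"
proof -
  assume a: "inj_ring_hom h"
  have "h (0 + 0) = h 0 + h 0" by (rule irh_add[OF a])
  thus ?thesis by simp
qed
lemma irh_zero_iff: "inj_ring_hom h \<Longrightarrow> h x = 0 \<longleftrightarrow> x = 0"
  using irh_0[of h] by (auto simp: inj_ring_hom_def)
lemma irh_uminus: "inj_ring_hom h \<Longrightarrow> h (- x) = - h x"
proof -
  assume a: "inj_ring_hom h"
  have "h (x + - x) = h x + h (- x)" by (rule irh_add[OF a])
  thus ?thesis using irh_0[OF a] by (simp add: eq_neg_iff_add_eq_0 add.commute)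
qed
lemma irh_diff: "inj_ring_hom h \<Longrightarrow> h (x - y) = h x - h y"
  using irh_add[of h x "-y"] irh_uminus[of h y] by simp
lemma irh_inj: "inj_ring_hom h \<Longrightarrow> h x = h y \<longleftrightarrow> x = y"
  using irh_diff[of h x y] irh_zero_iff[of h "x - y"] by auto
lemma irh_power: "inj_ring_hom h \<Longrightarrow> h (x ^ n) = h x ^ n"
  by (induction n) (simp_all add: irh_1 irh_mult)
lemma irh_sum: "inj_ring_hom h \<Longrightarrow> h (sum f A) = sum (\<lambda>i. h (f i)) A"
  by (induction A rule: infinite_finite_induct) (simp_all add: irh_0 irh_add)
lemma irh_of_nat: "inj_ring_hom h \<Longrightarrow> h (of_nat n) = of_nat n"
  by (induction n) (simp_all add: irh_0 irh_1 irh_add)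
lemma irh_of_int: "inj_ring_hom h \<Longrightarrow> h (of_int n) = of_int n"
proof -
  assume h: "inj_ring_hom h"
  show ?thesis
  proof (cases n rule: int_cases)
    case (nonneg k) thus ?thesis using irh_of_nat[OF h, of k] by simp
  next
    case (neg k) thus ?thesis using irh_of_nat[OF h, of "Suc k"] irh_uminus[OF h, of "of_nat (Suc k)"]
      by (simp only: of_int_minus of_int_of_nat_eq)
  qed
qed
lemma irh_comp: "inj_ring_hom h \<Longrightarrow> inj_ring_hom g \<Longrightarrow> inj_ring_hom (\<lambda>x. h (g x))"
  by (simp add: inj_ring_hom_def)
lemma irh_dvd: "inj_ring_hom h \<Longrightarrow> x dvd y \<Longrightarrow> h x dvd h y"
  by (auto simp: irh_mult)
lemma irh_unit: "inj_ring_hom h \<Longrightarrow> x dvd 1 \<Longrightarrow> h x dvd 1"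
  using irh_dvd[of h x 1] by (simp add: irh_1)

lemma irh_irreducible:
  fixes h :: "'b::idom_divide \<Rightarrow> 'b"
  assumes h: "inj_ring_hom h" and g: "inj_ring_hom g" and hg: "\<And>x. g (h x) = x" and gh: "\<And>x. h (g x) = x"
    and irr: "irreducible Q"
  shows "irreducible (h Q)"
proof (rule irreducibleI)
  show "h Q \<noteq> 0" using irr irh_zero_iff[OF h] by auto
  show "\<not> (h Q) dvd 1"
  proof
    assume "(h Q) dvd 1"
    hence "(g (h Q)) dvd 1" by (rule irh_unit[OF g])
    thus False using irr hg by (auto simp: irreducible_def)
  qed
  fix a b assume "h Q = a * b"
  hence "Q = g a * g b" using hg[of Q] irh_mult[OF g] by metis
  hence "(g a) dvd 1 \<or> (g b) dvd 1" using irr by (auto dest: irreducibleD)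
  thus "a dvd 1 \<or> b dvd 1" using irh_unit[OF h] gh by metis
qed

lemma irh_fract_lift_Fract:
  assumes h: "inj_ring_hom h" and d: "d \<noteq> 0"
  shows "fract_lift h (Fract n d) = Fract (h n) (h d)"
proof -
  have w: "\<forall>n' d'. d' \<noteq> 0 \<longrightarrow> Fract n d = Fract n' d' \<longrightarrow> Fract (h n) (h d) = Fract (h n') (h d')"
  proof (intro allI impI)
    fix n' d' assume d': "d' \<noteq> 0" and e: "Fract n d = Fract n' d'"
    hence "n * d' = n' * d" using d by (simp add: eq_fract)
    hence "h n * h d' = h n' * h d" using irh_mult[OF h] by metis
    thus "Fract (h n) (h d) = Fract (h n') (h d')"
      using d d' irh_zero_iff[OF h] by (simp add: eq_fract)
  qed
  show ?thesis unfolding fract_lift_def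
    by (rule someI2[of _ "Fract (h n) (h d)"], rule w) (use d in auto)
qed

lemma fl_add: assumes h: "inj_ring_hom h"
  shows "fract_lift h (x + y) = fract_lift h x + fract_lift h y"
proof (cases x; cases y)
  fix a b c d assume x: "x = Fract a b" "b \<noteq> 0" and y: "y = Fract c d" "d \<noteq> 0"
  show ?thesis using x y irh_fract_lift_Fract[OF h] irh_zero_iff[OF h]
    by (simp add: irh_add[OF h] irh_mult[OF h])
qed

lemma fl_mult: assumes h: "inj_ring_hom h"
  shows "fract_lift h (x * y) = fract_lift h x * fract_lift h y"
proof (cases x; cases y)
  fix a b c d assume x: "x = Fract a b" "b \<noteq> 0" and y: "y = Fract c d" "d \<noteq> 0"
  show ?thesis using x y irh_fract_lift_Fract[OF h] irh_zero_iff[OF h]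
    by (simp add: irh_add[OF h] irh_mult[OF h])
qed

lemma fl_one: assumes h: "inj_ring_hom h" shows "fract_lift h 1 = 1"
  using irh_fract_lift_Fract[OF h, of 1 1] by (simp add: irh_1[OF h] One_fract_def)

lemma fl_zero_iff: assumes h: "inj_ring_hom h" shows "fract_lift h x = 0 \<longleftrightarrow> x = 0"
proof (cases x)
  fix a b assume x: "x = Fract a b" "b \<noteq> 0"
  show ?thesis using x irh_fract_lift_Fract[OF h] irh_zero_iff[OF h]
    by (simp add: Zero_fract_def eq_fract)
qed

lemma fl_irh: "inj_ring_hom h \<Longrightarrow> inj_ring_hom (fract_lift h)"
  by (simp add: inj_ring_hom_def fl_add fl_mult fl_one fl_zero_iff)

lemma fl_to_fract: "inj_ring_hom h \<Longrightarrow> fract_lift h (to_fract x) = to_fract (h x)"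
  by (simp add: to_fract_def irh_fract_lift_Fract irh_1)

lemma fl_cong: "(\<And>x. h x = g x) \<Longrightarrow> fract_lift h = fract_lift g"
proof -
  assume "\<And>x. h x = g x" hence "h = g" by auto
  thus ?thesis by simp
qed

lemma map_poly_irh: assumes h: "inj_ring_hom h" shows "inj_ring_hom (map_poly h)"
proof -
  have add: "map_poly h (p + q) = map_poly h p + map_poly h q" for p q
    by (rule poly_eqI) (simp add: coeff_map_poly irh_0[OF h] irh_add[OF h])
  have mult: "map_poly h (p * q) = map_poly h p * map_poly h q" for p q
    by (rule poly_eqI) (simp add: coeff_map_poly irh_0[OF h] coeff_mult irh_sum[OF h] irh_mult[OF h])
  have one: "map_poly h 1 = 1" by (simp add: irh_1[OF h])
  have z: "map_poly h p = 0 \<longrightarrow> p = 0" for p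
    using irh_zero_iff[OF h] by (simp add: map_poly_eq_0_iff irh_0[OF h])
  show ?thesis unfolding inj_ring_hom_def using add mult one z by blast
qed

lemma degree_map_poly_irh: "inj_ring_hom h \<Longrightarrow> degree (map_poly h p) = degree p"
  by (rule degree_map_poly) (simp add: irh_zero_iff)

lemma lead_coeff_map_poly_irh: "inj_ring_hom h \<Longrightarrow> lead_coeff (map_poly h p) = h (lead_coeff p)"
  by (simp add: degree_map_poly_irh coeff_map_poly irh_0)

lemma pcompose_irh:
  fixes s :: "'b::idom poly"
  assumes "degree s = 1" shows "inj_ring_hom (\<lambda>p. p \<circ>\<^sub>p s)"
  unfolding inj_ring_hom_def using assms
  by (auto simp: pcompose_add pcompose_mult pcompose_1 pcompose_eq_0)

lemma map_poly_pcompose_irh: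
  assumes h: "inj_ring_hom h"
  shows "map_poly h (p \<circ>\<^sub>p s) = map_poly h p \<circ>\<^sub>p map_poly h s"
proof (induction p)
  case 0 thus ?case by simp
next
  case (pCons a p)
  have "map_poly h (pCons a p \<circ>\<^sub>p s) = map_poly h ([:a:] + s * (p \<circ>\<^sub>p s))"
    by (simp add: pcompose_pCons)
  also have "\<dots> = [:h a:] + map_poly h s * map_poly h (p \<circ>\<^sub>p s)"
    using map_poly_irh[OF h] by (simp add: irh_add irh_mult irh_0[OF h] map_poly_pCons)
  also have "\<dots> = map_poly h (pCons a p) \<circ>\<^sub>p map_poly h s"
    using pCons by (simp add: pcompose_pCons map_poly_pCons irh_0[OF h])
  finally show ?case .
qed

lemma scale_irh: "(u::'a::field) \<noteq> 0 \<Longrightarrow> inj_ring_hom (\<lambda>p::'a poly. p \<circ>\<^sub>p [:0, u:])"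
  by (rule pcompose_irh) simp

lemma tau_x_irh: "u \<noteq> 0 \<Longrightarrow> inj_ring_hom (tau_x u)"
  unfolding tau_x_def by (rule fl_irh[OF scale_irh])

lemma tau_x_Fract: "u \<noteq> 0 \<Longrightarrow> d \<noteq> 0 \<Longrightarrow> tau_x u (Fract n d) = Fract (n \<circ>\<^sub>p [:0, u:]) (d \<circ>\<^sub>p [:0, u:])"
  unfolding tau_x_def by (rule irh_fract_lift_Fract[OF scale_irh])

lemma tau_x_comp:
  assumes "u \<noteq> 0" "v \<noteq> 0"
  shows "tau_x u (tau_x v c) = tau_x (u * v) c"
proof (cases c)
  fix n d assume c: "c = Fract n d" "d \<noteq> 0"
  have nz: "d \<circ>\<^sub>p [:0, v:] \<noteq> 0" using irh_zero_iff[OF scale_irh[OF assms(2)], of d] c(2) by simp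
  have e: "[:0, v:] \<circ>\<^sub>p [:0, u:] = [:0, u * v:]" by (simp add: pcompose_pCons mult.commute)
  show ?thesis using c nz assms
    by (simp add: tau_x_Fract pcompose_assoc[symmetric] e)
qed

lemma tau_x_1: "tau_x 1 c = c"
  by (cases c) (simp add: tau_x_Fract)

lemma tau_x_const: "u \<noteq> 0 \<Longrightarrow> tau_x u (to_fract [:k:]) = to_fract [:k:]"
  by (simp add: to_fract_def tau_x_Fract pcompose_1)

definition Tm :: "'a::field \<Rightarrow> int \<times> int \<Rightarrow> 'a poly fract poly \<Rightarrow> 'a poly fract poly" where
  "Tm q z p = map_poly (tau_x (q powi fst z)) (p \<circ>\<^sub>p [:of_int (snd z), 1:])"

lemma Tm_irh: assumes "q \<noteq> 0" shows "inj_ring_hom (Tm q z)"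
proof -
  have a: "inj_ring_hom (map_poly (tau_x (q powi fst z)))"
    by (rule map_poly_irh, rule tau_x_irh) (use assms in simp)
  have b: "inj_ring_hom (\<lambda>p::'a poly fract poly. p \<circ>\<^sub>p [:of_int (snd z), 1:])"
    by (rule pcompose_irh) simp
  show ?thesis unfolding Tm_def[abs_def] by (rule irh_comp[OF a b])
qed

lemma shift_comp: "[:a, 1:] \<circ>\<^sub>p [:b, (1::'b::comm_ring_1):] = [:a + b, 1:]"
  by (simp add: pcompose_pCons)

lemma Tm_comp:
  assumes q: "q \<noteq> 0"
  shows "Tm q z (Tm q w p) = Tm q (z + w) p"
proof -
  obtain i j where z: "z = (i, j)" by fastforce
  obtain k l where w: "w = (k, l)" by fastforce
  let ?t = "\<lambda>i. tau_x (q powi i)"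
  have ti: "inj_ring_hom (?t i)" for i by (rule tau_x_irh) (use q in simp)
  have sh: "map_poly (?t i) [:of_int j, 1:] = [:of_int j, 1:]" for i j
    using ti[of i] by (simp add: map_poly_pCons irh_of_int irh_1 irh_0)
  have "Tm q z (Tm q w p) = map_poly (?t i) (map_poly (?t k) (p \<circ>\<^sub>p [:of_int l, 1:]) \<circ>\<^sub>p [:of_int j, 1:])"
    by (simp add: Tm_def z w)
  also have "\<dots> = map_poly (?t i) (map_poly (?t k) (p \<circ>\<^sub>p [:of_int l, 1:])) \<circ>\<^sub>p [:of_int j, 1:]"
    by (simp add: map_poly_pcompose_irh[OF ti] sh)
  also have "map_poly (?t i) (map_poly (?t k) (p \<circ>\<^sub>p [:of_int l, 1:])) =
      map_poly (?t (i + k)) (p \<circ>\<^sub>p [:of_int l, 1:])"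
    using q by (simp add: map_poly_map_poly irh_0[OF ti] o_def tau_x_comp power_int_add)
  also have "map_poly (?t (i + k)) (p \<circ>\<^sub>p [:of_int l, 1:]) \<circ>\<^sub>p [:of_int j, 1:] =
     map_poly (?t (i + k)) ((p \<circ>\<^sub>p [:of_int l, 1:]) \<circ>\<^sub>p [:of_int j, 1:])"
    by (simp add: map_poly_pcompose_irh[OF ti] sh)
  also have "(p \<circ>\<^sub>p [:of_int l, 1:]) \<circ>\<^sub>p [:of_int j, 1:] = p \<circ>\<^sub>p [:of_int (l + j), 1:]"
    by (simp add: pcompose_assoc[symmetric] shift_comp)
  finally show ?thesis by (simp add: Tm_def z w add.commute)
qed

lemma Tm_zero: "Tm q 0 p = p"
  by (simp add: Tm_def tau_x_1[abs_def])

lemma Tm_inv: "q \<noteq> 0 \<Longrightarrow> Tm q (- z) (Tm q z p) = p"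
  by (simp add: Tm_comp Tm_zero)

lemma Tm_inv': "q \<noteq> 0 \<Longrightarrow> Tm q z (Tm q (- z) p) = p"
  by (simp add: Tm_comp Tm_zero)

lemma degree_Tm: "q \<noteq> 0 \<Longrightarrow> degree (Tm q z p) = degree p"
  unfolding Tm_def
  by (subst degree_map_poly_irh) (simp_all add: tau_x_irh degree_pcompose)

lemma lead_coeff_Tm: "q \<noteq> 0 \<Longrightarrow> lead_coeff (Tm q z p) = tau_x (q powi fst z) (lead_coeff p)"
  unfolding Tm_def
  by (subst lead_coeff_map_poly_irh) (simp_all add: tau_x_irh lead_coeff_comp)

lemma monic_Tm: "q \<noteq> 0 \<Longrightarrow> lead_coeff p = 1 \<Longrightarrow> lead_coeff (Tm q z p) = 1"
  by (simp add: lead_coeff_Tm irh_1 tau_x_irh)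

lemma irreducible_Tm: "q \<noteq> 0 \<Longrightarrow> irreducible p \<Longrightarrow> irreducible (Tm q z p)"
  by (rule irh_irreducible[where g = "Tm q (-z)"]) (simp_all add: Tm_irh Tm_inv Tm_inv')

definition TK :: "'a::field \<Rightarrow> int \<times> int \<Rightarrow> 'a poly fract poly fract \<Rightarrow> 'a poly fract poly fract" where
  "TK q z = fract_lift (Tm q z)"

lemma TK_irh: "q \<noteq> 0 \<Longrightarrow> inj_ring_hom (TK q z)"
  unfolding TK_def by (rule fl_irh[OF Tm_irh])

lemma TK_Fract: "q \<noteq> 0 \<Longrightarrow> d \<noteq> 0 \<Longrightarrow> TK q z (Fract n d) = Fract (Tm q z n) (Tm q z d)"
  unfolding TK_def by (rule irh_fract_lift_Fract[OF Tm_irh])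

lemma tauK_TK: "tauK q = TK q (1, 0)"
  unfolding tauK_def TK_def
  by (rule fl_cong) (simp add: Tm_def tau_xy_def)

lemma sigK_TK: "sigK = TK q (0, 1)"
  unfolding sigK_def TK_def
  by (rule fl_cong) (simp add: Tm_def tau_x_1[abs_def])

section \<open>Bezout for polynomials over a field\<close>

lemma field_poly_bezout_aux:
  fixes A B :: "'b::field poly"
  shows "\<exists>u v g. u * A + v * B = g \<and> g dvd A \<and> g dvd B"
proof (induction "degree B" arbitrary: A B rule: less_induct)
  case less
  show ?case
  proof (cases "B = 0")
    case True thus ?thesis by (intro exI[of _ 1] exI[of _ 0] exI[of _ A]) simp
  next
    case B: False
    show ?thesis
    proof (cases "A mod B = 0")
      case True thus ?thesis
        by (intro exI[of _ 0] exI[of _ 1] exI[of _ B]) (simp add: mod_0_imp_dvd)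
    next
      case False
      have "degree (A mod B) < degree B" by (rule degree_mod_less'[OF B False])
      from less[OF this, of B] obtain u v g where
        g: "u * B + v * (A mod B) = g" "g dvd B" "g dvd A mod B" by blast
      have A: "A = (A div B) * B + A mod B" by simp
      have "v * A + (u - v * (A div B)) * B = u * B + v * (A - (A div B) * B)"
        by (simp add: algebra_simps)
      also have "A - (A div B) * B = A mod B" by (simp add: minus_div_mult_eq_mod)
      finally have "v * A + (u - v * (A div B)) * B = g" using g(1) by simp
      moreover have "g dvd A" using g(2,3) A by (metis dvd_add dvd_mult)
      ultimately show ?thesis using g(2) by blast
    qed
  qed
qed

lemma field_poly_inverse_mod:
  fixes Q E :: "'b::field poly"
  assumes irr: "irreducible Q" and nd: "\<not> Q dvd E"
  shows "\<exists>u. Q dvd u * E - 1"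
proof -
  obtain u v g where g: "u * E + v * Q = g" "g dvd E" "g dvd Q"
    using field_poly_bezout_aux[of E Q] by blast
  from g(3) obtain w where w: "Q = g * w" by (auto elim: dvdE)
  have "g dvd 1 \<or> w dvd 1" using irreducibleD[OF irr w] .
  moreover have "\<not> w dvd 1"
  proof
    assume "w dvd 1"
    then obtain w' where "1 = w * w'" by (auto elim: dvdE)
    hence "g = Q * w'" using w by (metis mult.assoc mult.right_neutral)
    hence "Q dvd g" by simp
    thus False using g(2) nd dvd_trans by blast
  qed
  ultimately have "g dvd 1" by blast
  then obtain k where k: "1 = g * k" by (auto elim: dvdE)
  have "(k * u) * E - 1 = (k * u) * E - (u * E + v * Q) * k" using k g(1) by (simp add: mult.commute)
  also have "\<dots> = - (k * v) * Q" by (simp add: algebra_simps)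
  finally have "(k * u) * E - 1 = - (k * v) * Q" .
  thus ?thesis by (intro exI[of _ "k * u"]) simp
qed

section \<open>Q-regular fractions\<close>

definition regQ :: "'b::field poly \<Rightarrow> 'b poly fract \<Rightarrow> bool" where
  "regQ Q G \<longleftrightarrow> (\<exists>N V. V \<noteq> 0 \<and> \<not> Q dvd V \<and> G = Fract N V)"

lemma regQ_Fract: "V \<noteq> 0 \<Longrightarrow> \<not> Q dvd V \<Longrightarrow> regQ Q (Fract N V)"
  unfolding regQ_def by blast

lemma regQ_0: "\<not> Q dvd 1 \<Longrightarrow> regQ Q 0"
  unfolding regQ_def by (intro exI[of _ 0] exI[of _ 1]) (simp add: Zero_fract_def)

lemma regQ_add:
  assumes p: "prime_elem Q" and "regQ Q F" "regQ Q G" shows "regQ Q (F + G)"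
proof -
  from assms(2) obtain N V where 1: "V \<noteq> 0" "\<not> Q dvd V" "F = Fract N V" by (auto simp: regQ_def)
  from assms(3) obtain N' V' where 2: "V' \<noteq> 0" "\<not> Q dvd V'" "G = Fract N' V'" by (auto simp: regQ_def)
  have "\<not> Q dvd V * V'" using 1 2 p prime_elem_dvd_mult_iff by blast
  moreover have "F + G = Fract (N * V' + N' * V) (V * V')" using 1 2 by simp
  ultimately show ?thesis using 1 2 by (simp add: regQ_Fract)
qed

lemma regQ_uminus: "regQ Q F \<Longrightarrow> regQ Q (- F)"
  unfolding regQ_def by (metis minus_fract)

lemma regQ_diff: "prime_elem Q \<Longrightarrow> regQ Q F \<Longrightarrow> regQ Q G \<Longrightarrow> regQ Q (F - G)"
  using regQ_add[of Q F "- G"] regQ_uminus[of Q G] by simp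

section \<open>Polar parts\<close>

definition pf :: "'b::field poly \<Rightarrow> (nat \<Rightarrow> 'b poly) \<Rightarrow> nat \<Rightarrow> 'b poly fract" where
  "pf Q r e = (\<Sum>j\<in>{1..e}. Fract (r j) (Q ^ j))"

definition decomp :: "'b::field poly \<Rightarrow> 'b poly fract \<Rightarrow> nat \<Rightarrow> (nat \<Rightarrow> 'b poly) \<Rightarrow> bool" where
  "decomp Q F e r \<longleftrightarrow> (\<forall>j. degree (r j) < degree Q) \<and> r 0 = 0 \<and> (\<forall>j>e. r j = 0)
      \<and> regQ Q (F - pf Q r e)"

lemma pf_pad:
  assumes "\<forall>j>e. r j = 0" "e \<le> E" shows "pf Q r E = pf Q r e"
  unfolding pf_def using assms
  by (intro sum.mono_neutral_right) (auto simp: fract_collapse)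

lemma Fract_mult_cancel_right: "D \<noteq> 0 \<Longrightarrow> Fract (a * D) (b * D) = Fract a b"
  by (metis mult.commute mult_fract_cancel)

lemma Fract_add_same: assumes "D \<noteq> 0" shows "Fract (a + b) D = Fract a D + Fract b D"
proof -
  have "Fract a D + Fract b D = Fract ((a + b) * D) (D * D)" using assms by (simp add: distrib_right)
  also have "\<dots> = Fract (a + b) D" by (rule Fract_mult_cancel_right[OF assms])
  finally show ?thesis by simp
qed

lemma Fract_diff_same: assumes "D \<noteq> 0" shows "Fract (a - b) D = Fract a D - Fract b D"
proof -
  have "Fract a D - Fract b D = Fract ((a - b) * D) (D * D)" using assms by (simp add: left_diff_distrib)
  also have "\<dots> = Fract (a - b) D" by (rule Fract_mult_cancel_right[OF assms])
  finally show ?thesis by simp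
qed

lemma sum_Fract_same: "D \<noteq> 0 \<Longrightarrow> (\<Sum>j\<in>A. Fract (f j) D) = Fract (\<Sum>j\<in>A. f j) D"
proof (induction A rule: infinite_finite_induct)
  case (infinite A) thus ?case by (simp add: fract_collapse)
next
  case empty thus ?case by (simp add: fract_collapse)
next
  case (insert x F)
  thus ?case by (simp del: add_fract add: Fract_add_same)
qed

lemma pf_as_Fract:
  assumes "Q \<noteq> 0"
  shows "pf Q s E = Fract (\<Sum>j\<in>{1..E}. s j * Q ^ (E - j)) (Q ^ E)"
proof -
  have "pf Q s E = (\<Sum>j\<in>{1..E}. Fract (s j * Q ^ (E - j)) (Q ^ E))"
    unfolding pf_def
  proof (rule sum.cong[OF refl])
    fix j assume "j \<in> {1..E}"
    hence "E = (E - j) + j" by simp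
    hence "Q ^ E = Q ^ (E - j) * Q ^ j" by (metis power_add)
    hence "Fract (s j * Q ^ (E - j)) (Q ^ E) = Fract (Q ^ (E - j) * s j) (Q ^ (E - j) * Q ^ j)"
      by (simp add: mult.commute)
    also have "\<dots> = Fract (s j) (Q ^ j)" using assms by (intro mult_fract_cancel) simp
    finally show "Fract (s j) (Q ^ j) = Fract (s j * Q ^ (E - j)) (Q ^ E)" by simp
  qed
  also have "\<dots> = Fract (\<Sum>j\<in>{1..E}. s j * Q ^ (E - j)) (Q ^ E)"
    using assms by (simp add: sum_Fract_same)
  finally show ?thesis .
qed

lemma prime_not_dvd_small:
  fixes Q s :: "'b::field poly"
  assumes "degree s < degree Q" "s \<noteq> 0" shows "\<not> Q dvd s"
proof
  assume "Q dvd s"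
  hence "degree Q \<le> degree s" using assms(2) by (rule dvd_imp_degree_le)
  thus False using assms(1) by simp
qed

lemma pf_zero_aux:
  fixes Q :: "'b::field poly"
  assumes p: "prime_elem Q" and dQ: "degree Q > 0"
  shows "(\<forall>j. degree (s j) < degree Q) \<Longrightarrow> s 0 = 0 \<Longrightarrow> regQ Q (pf Q s E) \<Longrightarrow> \<forall>j\<le>E. s j = 0"
proof (induction E)
  case 0 thus ?case by simp
next
  case (Suc E)
  show ?case
  proof (cases "s (Suc E) = 0")
    case True
    have "pf Q s (Suc E) = pf Q s E"
      unfolding pf_def using True by (simp add: fract_collapse)
    with Suc have "\<forall>j\<le>E. s j = 0" by simp
    with True show ?thesis using le_Suc_eq by blast
  next
    case False
    have Q0: "Q \<noteq> 0" using dQ by auto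
    let ?W = "\<Sum>j\<in>{1..Suc E}. s j * Q ^ (Suc E - j)"
    let ?W' = "\<Sum>j\<in>{1..E}. s j * Q ^ (E - j)"
    have W: "?W = s (Suc E) + Q * ?W'"
    proof -
      have "?W = s (Suc E) * Q ^ 0 + (\<Sum>j\<in>{1..E}. s j * Q ^ (Suc E - j))"
        by (simp add: add.commute)
      also have "(\<Sum>j\<in>{1..E}. s j * Q ^ (Suc E - j)) = (\<Sum>j\<in>{1..E}. Q * (s j * Q ^ (E - j)))"
        by (rule sum.cong) (auto simp: Suc_diff_le)
      also have "\<dots> = Q * ?W'" by (simp add: sum_distrib_left)
      finally show ?thesis by simp
    qed
    have ndW: "\<not> Q dvd ?W"
    proof
      assume "Q dvd ?W"
      hence "Q dvd s (Suc E) + Q * ?W'" unfolding W[symmetric] .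
      hence "Q dvd s (Suc E)" by (simp add: dvd_add_left_iff)
      thus False using prime_not_dvd_small[of "s (Suc E)" Q] Suc.prems False by auto
    qed
    from Suc.prems(3) obtain N V where NV: "V \<noteq> 0" "\<not> Q dvd V" "pf Q s (Suc E) = Fract N V"
      by (auto simp: regQ_def)
    have "Fract ?W (Q ^ Suc E) = Fract N V" using pf_as_Fract[OF Q0, of s "Suc E"] NV(3) by simp
    hence e: "?W * V = N * Q ^ Suc E" using NV(1) Q0 eq_fract(1)[of "Q ^ Suc E" V ?W N] by simp
    have "Q dvd N * Q ^ Suc E" by simp
    hence "Q dvd ?W * V" by (simp only: e)
    hence "Q dvd ?W \<or> Q dvd V" by (rule prime_elem_dvd_multD[OF p])
    hence False using ndW NV(2) by blast
    thus ?thesis ..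
  qed
qed

lemma Fract_uminus_same: "Fract (- a) D = - Fract a D"
  by simp

lemma decomp_unique:
  fixes Q :: "'b::field poly"
  assumes p: "prime_elem Q" and dQ: "degree Q > 0"
    and d1: "decomp Q F e r" and d2: "decomp Q F e' r'"
  shows "r = r'"
proof -
  have Q0: "Q \<noteq> 0" using dQ by auto
  define E where "E = max e e'"
  have e1: "pf Q r E = pf Q r e" using d1 by (intro pf_pad) (auto simp: decomp_def E_def)
  have e2: "pf Q r' E = pf Q r' e'" using d2 by (intro pf_pad) (auto simp: decomp_def E_def)
  define s where "s j = r j - r' j" for j
  have "pf Q s E = pf Q r E - pf Q r' E"
    unfolding pf_def s_def using Q0 by (simp del: diff_fract add: sum_subtractf[symmetric] Fract_diff_same)
  also have "\<dots> = (F - pf Q r' e') - (F - pf Q r e)" using e1 e2 by simp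
  finally have eq: "pf Q s E = (F - pf Q r' e') - (F - pf Q r e)" .
  have "regQ Q ((F - pf Q r' e') - (F - pf Q r e))"
    by (rule regQ_diff[OF p]) (use d1 d2 in \<open>auto simp: decomp_def\<close>)
  hence reg: "regQ Q (pf Q s E)" unfolding eq .
  have deg: "\<forall>j. degree (s j) < degree Q" using d1 d2
    by (auto simp: decomp_def s_def intro: le_less_trans[OF degree_diff_le_max])
  have s0: "s 0 = 0" using d1 d2 by (simp add: decomp_def s_def)
  have "\<forall>j\<le>E. s j = 0" by (rule pf_zero_aux[OF p dQ deg s0 reg])
  moreover have "\<forall>j>E. s j = 0" using d1 d2 by (auto simp: decomp_def s_def E_def)
  ultimately have "\<forall>j. s j = 0" using not_le by blast
  thus ?thesis by (auto simp: s_def fun_eq_iff)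
qed

lemma irr_prime: "irreducible (Q::'b::field poly) \<Longrightarrow> prime_elem Q"
  by (rule field_poly_irreducible_imp_prime)

lemma irr_degree: assumes "irreducible (Q::'b::field poly)" shows "degree Q > 0"
proof -
  have "Q \<noteq> 0" "\<not> is_unit Q" using assms by (auto simp: irreducible_def)
  thus ?thesis using is_unit_iff_degree[of Q] by auto
qed

lemma irr_not_unit: "irreducible Q \<Longrightarrow> \<not> Q dvd 1"
  by (auto simp: irreducible_def)

lemma decomp_exists_aux:
  fixes Q :: "'b::field poly"
  assumes irr: "irreducible Q"
  shows "E \<noteq> 0 \<Longrightarrow> \<not> Q dvd E \<Longrightarrow> \<exists>r. decomp Q (Fract N (Q ^ e * E)) e r"
proof (induction e arbitrary: N)
  case 0
  have "decomp Q (Fract N (Q ^ 0 * E)) 0 (\<lambda>_. 0)"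
    unfolding decomp_def pf_def using 0 irr_degree[OF irr] by (auto intro!: regQ_Fract)
  thus ?case by blast
next
  case (Suc e)
  have dQ: "degree Q > 0" by (rule irr_degree[OF irr])
  have Q0: "Q \<noteq> 0" using dQ by auto
  obtain u where u: "Q dvd u * E - 1" using field_poly_inverse_mod[OF irr Suc.prems(2)] by blast
  define \<rho> where "\<rho> = (N * u) mod Q"
  have deg\<rho>: "degree \<rho> < degree Q"
  proof (cases "\<rho> = 0")
    case True thus ?thesis using dQ by simp
  next
    case False thus ?thesis unfolding \<rho>_def by (rule degree_mod_less'[OF Q0])
  qed
  have rho_eq: "\<rho> = N * u - (N * u div Q) * Q" unfolding \<rho>_def by (simp add: minus_div_mult_eq_mod)
  have "N - \<rho> * E = - N * (u * E - 1) + Q * ((N * u div Q) * E)"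
    by (subst rho_eq) (simp add: algebra_simps)
  moreover have "Q dvd - N * (u * E - 1) + Q * ((N * u div Q) * E)"
    using u by (intro dvd_add) auto
  ultimately have "Q dvd N - \<rho> * E" by simp
  then obtain N' where N': "N - \<rho> * E = Q * N'" by (auto elim: dvdE)
  have QE0: "Q ^ Suc e * E \<noteq> 0" using Q0 Suc.prems by simp
  have F: "Fract N (Q ^ Suc e * E) - Fract \<rho> (Q ^ Suc e) = Fract N' (Q ^ e * E)"
  proof -
    have "Fract \<rho> (Q ^ Suc e) = Fract (\<rho> * E) (Q ^ Suc e * E)"
      using Suc.prems by (simp add: Fract_mult_cancel_right)
    hence "Fract N (Q ^ Suc e * E) - Fract \<rho> (Q ^ Suc e) = Fract (N - \<rho> * E) (Q ^ Suc e * E)"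
      using Fract_diff_same[OF QE0, of N "\<rho> * E"] by simp
    also have "\<dots> = Fract (Q * N') (Q * (Q ^ e * E))" by (simp add: N' mult.assoc)
    also have "\<dots> = Fract N' (Q ^ e * E)" using Q0 by (rule mult_fract_cancel)
    finally show ?thesis .
  qed
  from Suc.IH[OF Suc.prems] obtain r' where r': "decomp Q (Fract N' (Q ^ e * E)) e r'" by blast
  define r where "r = r'(Suc e := \<rho>)"
  have pf: "pf Q r (Suc e) = pf Q r' e + Fract \<rho> (Q ^ Suc e)"
  proof -
    have "pf Q r (Suc e) = pf Q r e + Fract (r (Suc e)) (Q ^ Suc e)"
      unfolding pf_def by (simp add: sum.cl_ivl_Suc)
    also have "pf Q r e = pf Q r' e" unfolding pf_def r_def by (rule sum.cong) auto
    finally show ?thesis by (simp add: r_def fun_upd_def)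
  qed
  have "Fract N (Q ^ Suc e * E) - pf Q r (Suc e) = Fract N' (Q ^ e * E) - pf Q r' e"
    by (simp only: pf F[symmetric]) (simp add: algebra_simps)
  hence "decomp Q (Fract N (Q ^ Suc e * E)) (Suc e) r"
    using r' deg\<rho> unfolding decomp_def r_def by auto
  thus ?case by blast
qed

lemma pow_decompose:
  fixes Q :: "'b::field poly"
  assumes dQ: "degree Q > 0"
  shows "D \<noteq> 0 \<Longrightarrow> \<exists>e E. D = Q ^ e * E \<and> E \<noteq> 0 \<and> \<not> Q dvd E"
proof (induction "degree D" arbitrary: D rule: less_induct)
  case less
  show ?case
  proof (cases "Q dvd D")
    case False thus ?thesis using less.prems by (intro exI[of _ 0] exI[of _ D]) simp
  next
    case True
    then obtain D' where D': "D = Q * D'" by (auto elim: dvdE)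
    hence D'0: "D' \<noteq> 0" using less.prems by auto
    have "Q \<noteq> 0" using dQ by auto
    hence "degree D = degree Q + degree D'" using D' D'0 by (simp add: degree_mult_eq)
    hence "degree D' < degree D" using dQ by simp
    from less.hyps[OF this D'0] obtain e E where "D' = Q ^ e * E" "E \<noteq> 0" "\<not> Q dvd E" by blast
    thus ?thesis using D' by (intro exI[of _ "Suc e"] exI[of _ E]) (simp add: mult.assoc)
  qed
qed

lemma decomp_exists:
  fixes Q :: "'b::field poly"
  assumes irr: "irreducible Q"
  shows "\<exists>e r. decomp Q F e r"
proof (cases F)
  fix N D assume F: "F = Fract N D" "D \<noteq> 0"
  obtain e E where "D = Q ^ e * E" "E \<noteq> 0" "\<not> Q dvd E"
    using pow_decompose[OF irr_degree[OF irr] F(2)] by blast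
  thus ?thesis using decomp_exists_aux[OF irr] F by metis
qed

definition cQ :: "'b::field poly \<Rightarrow> 'b poly fract \<Rightarrow> nat \<Rightarrow> 'b poly" where
  "cQ Q F = (THE r. \<exists>e. decomp Q F e r)"

lemma cQ_eq:
  assumes irr: "irreducible Q" and d: "decomp Q F e r"
  shows "cQ Q F = r"
  unfolding cQ_def
proof (rule the_equality)
  show "\<exists>e. decomp Q F e r" using d by blast
  fix r' assume "\<exists>e. decomp Q F e r'"
  then obtain e' where "decomp Q F e' r'" by blast
  thus "r' = r" using decomp_unique[OF irr_prime[OF irr] irr_degree[OF irr] _ d] by blast
qed

lemma cQ_decomp: "irreducible Q \<Longrightarrow> \<exists>e. decomp Q F e (cQ Q F)"
  using decomp_exists[of Q F] cQ_eq[of Q F] by blast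

lemma decomp_add:
  fixes Q :: "'b::field poly"
  assumes p: "prime_elem Q" and d1: "decomp Q F e r" and d2: "decomp Q G e' r'"
  shows "decomp Q (F + G) (max e e') (\<lambda>j. r j + r' j)"
proof -
  have Q0: "Q \<noteq> 0" using p by auto
  define E where "E = max e e'"
  have e1: "pf Q r E = pf Q r e" using d1 by (intro pf_pad) (auto simp: decomp_def E_def)
  have e2: "pf Q r' E = pf Q r' e'" using d2 by (intro pf_pad) (auto simp: decomp_def E_def)
  have "pf Q (\<lambda>j. r j + r' j) E = pf Q r E + pf Q r' E"
    unfolding pf_def using Q0 by (simp del: add_fract add: sum.distrib Fract_add_same)
  hence eq: "F + G - pf Q (\<lambda>j. r j + r' j) E = (F - pf Q r e) + (G - pf Q r' e')"
    using e1 e2 by (simp add: algebra_simps)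
  have "regQ Q ((F - pf Q r e) + (G - pf Q r' e'))"
    by (rule regQ_add[OF p]) (use d1 d2 in \<open>auto simp: decomp_def\<close>)
  moreover have "\<forall>j. degree (r j + r' j) < degree Q" using d1 d2
    by (auto simp: decomp_def intro: le_less_trans[OF degree_add_le_max])
  ultimately show ?thesis using d1 d2 unfolding decomp_def E_def[symmetric] eq
    by (auto simp: E_def)
qed

lemma decomp_uminus:
  assumes d: "decomp Q F e r"
  shows "decomp Q (- F) e (\<lambda>j. - r j)"
proof -
  have "pf Q (\<lambda>j. - r j) e = - pf Q r e"
    unfolding pf_def by (simp flip: sum_negf)
  hence eq: "- F - pf Q (\<lambda>j. - r j) e = - (F - pf Q r e)" by simp
  show ?thesis using d regQ_uminus[of Q "F - pf Q r e"] unfolding decomp_def eq by auto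
qed

lemma cQ_add: "irreducible Q \<Longrightarrow> cQ Q (F + G) j = cQ Q F j + cQ Q G j"
proof -
  assume irr: "irreducible Q"
  obtain e e' where "decomp Q F e (cQ Q F)" "decomp Q G e' (cQ Q G)" using cQ_decomp[OF irr] by blast
  from decomp_add[OF irr_prime[OF irr] this] have "cQ Q (F + G) = (\<lambda>j. cQ Q F j + cQ Q G j)"
    by (rule cQ_eq[OF irr])
  thus ?thesis by simp
qed

lemma cQ_uminus: "irreducible Q \<Longrightarrow> cQ Q (- F) j = - cQ Q F j"
proof -
  assume irr: "irreducible Q"
  obtain e where "decomp Q F e (cQ Q F)" using cQ_decomp[OF irr] by blast
  from decomp_uminus[OF this] have "cQ Q (- F) = (\<lambda>j. - cQ Q F j)" by (rule cQ_eq[OF irr])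
  thus ?thesis by simp
qed

lemma cQ_diff: "irreducible Q \<Longrightarrow> cQ Q (F - G) j = cQ Q F j - cQ Q G j"
  using cQ_add[of Q F "- G" j] cQ_uminus[of Q G j] by simp

lemma cQ_reg: assumes irr: "irreducible Q" and r: "regQ Q F" shows "cQ Q F = (\<lambda>_. 0)"
proof (rule cQ_eq[OF irr])
  show "decomp Q F 0 (\<lambda>_. 0)" unfolding decomp_def pf_def using r irr_degree[OF irr] by simp
qed

lemma cQ_Fract_pow:
  assumes irr: "irreducible Q" and da: "degree a < degree Q" and m: "m > 0"
  shows "cQ Q (Fract a (Q ^ m)) = (\<lambda>_. 0)(m := a)"
proof (rule cQ_eq[OF irr])
  have "pf Q ((\<lambda>_. 0)(m := a)) m = (\<Sum>j\<in>{1..m}. if j = m then Fract a (Q ^ j) else 0)"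
    unfolding pf_def by (rule sum.cong) (auto simp: fract_collapse)
  also have "\<dots> = Fract a (Q ^ m)" using m by simp
  finally have "Fract a (Q ^ m) - pf Q ((\<lambda>_. 0)(m := a)) m = 0" by simp
  thus "decomp Q (Fract a (Q ^ m)) m ((\<lambda>_. 0)(m := a))"
    unfolding decomp_def using m da irr_degree[OF irr] regQ_0[OF irr_not_unit[OF irr]] by auto
qed

lemma regQ_transport:
  assumes h: "inj_ring_hom h" and g: "inj_ring_hom g" and hg: "\<And>x. g (h x) = x"
    and r: "regQ Q F"
  shows "regQ (h Q) (fract_lift h F)"
proof -
  from r obtain N V where NV: "V \<noteq> 0" "\<not> Q dvd V" "F = Fract N V" by (auto simp: regQ_def)
  have "\<not> h Q dvd h V"
  proof
    assume "h Q dvd h V"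
    hence "g (h Q) dvd g (h V)" by (rule irh_dvd[OF g])
    thus False using NV hg by simp
  qed
  moreover have "h V \<noteq> 0" using NV irh_zero_iff[OF h] by auto
  ultimately show ?thesis using NV by (simp add: irh_fract_lift_Fract[OF h] regQ_Fract)
qed

lemma decomp_transport:
  fixes h :: "'b::field poly \<Rightarrow> 'b poly"
  assumes h: "inj_ring_hom h" and g: "inj_ring_hom g" and hg: "\<And>x. g (h x) = x"
    and dh: "\<And>p. degree (h p) = degree p" and Q0: "Q \<noteq> 0"
    and d: "decomp Q F e r"
  shows "decomp (h Q) (fract_lift h F) e (\<lambda>j. h (r j))"
proof -
  have fl: "inj_ring_hom (fract_lift h)" by (rule fl_irh[OF h])
  have "fract_lift h (pf Q r e) = pf (h Q) (\<lambda>j. h (r j)) e"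
    unfolding pf_def using Q0
    by (simp add: irh_sum[OF fl] irh_fract_lift_Fract[OF h] irh_power[OF h])
  hence eq: "fract_lift h (F - pf Q r e) = fract_lift h F - pf (h Q) (\<lambda>j. h (r j)) e"
    by (simp add: irh_diff[OF fl])
  have "regQ (h Q) (fract_lift h (F - pf Q r e))"
    by (rule regQ_transport[OF h g hg]) (use d in \<open>simp add: decomp_def\<close>)
  thus ?thesis using d unfolding decomp_def eq by (simp add: dh irh_0[OF h])
qed

lemma cQ_transport:
  fixes h :: "'b::field poly \<Rightarrow> 'b poly"
  assumes h: "inj_ring_hom h" and g: "inj_ring_hom g" and hg: "\<And>x. g (h x) = x" and gh: "\<And>x. h (g x) = x"
    and dh: "\<And>p. degree (h p) = degree p" and irr: "irreducible Q"
  shows "cQ (h Q) (fract_lift h F) j = h (cQ Q F j)"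
proof -
  obtain e where "decomp Q F e (cQ Q F)" using cQ_decomp[OF irr] by blast
  from decomp_transport[OF h g hg dh _ this] have
    "decomp (h Q) (fract_lift h F) e (\<lambda>j. h (cQ Q F j))" using irr by (auto simp: irreducible_def)
  from cQ_eq[OF irh_irreducible[OF h g hg gh irr] this] show ?thesis by simp
qed

lemma cQ_support:
  assumes irr: "irreducible Q" and F: "F = Fract N D" "D \<noteq> 0" and nz: "cQ Q F j \<noteq> 0"
  shows "Q dvd D"
proof (rule ccontr)
  assume "\<not> Q dvd D"
  hence "regQ Q F" using F by (simp add: regQ_Fract)
  thus False using cQ_reg[OF irr] nz by simp
qed

lemma monic_irr_dvd_eq:
  fixes Q Q0 :: "'b::field poly"
  assumes "lead_coeff Q = 1" "lead_coeff Q0 = 1" "irreducible Q" "irreducible Q0" "Q dvd Q0"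
  shows "Q = Q0"
proof -
  from assms(5) obtain w where w: "Q0 = Q * w" by (auto elim: dvdE)
  have "Q dvd 1 \<or> w dvd 1" using irreducibleD[OF assms(4) w] .
  hence "w dvd 1" using assms(3) by (auto simp: irreducible_def)
  moreover have w0: "w \<noteq> 0" using w assms(4) by (auto simp: irreducible_def)
  ultimately have "degree w = 0" using is_unit_iff_degree by blast
  moreover have "lead_coeff w = 1" using w assms(1,2) by (simp add: lead_coeff_mult)
  ultimately have "w = 1" by (metis degree_0_id one_pCons)
  thus ?thesis using w by simp
qed

lemma finite_monic_irr_divisors:
  fixes D :: "'b::field poly"
  shows "D \<noteq> 0 \<Longrightarrow> finite {Q. lead_coeff Q = 1 \<and> irreducible Q \<and> Q dvd D}"
proof (induction "degree D" arbitrary: D rule: less_induct)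
  case less
  show ?case
  proof (cases "{Q. lead_coeff Q = 1 \<and> irreducible Q \<and> Q dvd D} = {}")
    case True show ?thesis by (subst True) simp
  next
    case False
    then obtain Q0 where Q0: "lead_coeff Q0 = 1" "irreducible Q0" "Q0 dvd D" by blast
    then obtain D' where D': "D = Q0 * D'" by (auto elim: dvdE)
    hence D'0: "D' \<noteq> 0" using less.prems by auto
    have dQ0: "degree Q0 > 0" by (rule irr_degree[OF Q0(2)])
    hence "Q0 \<noteq> 0" by auto
    hence "degree D = degree Q0 + degree D'" using D' D'0 by (simp add: degree_mult_eq)
    hence "degree D' < degree D" using dQ0 by simp
    from less.hyps[OF this D'0] have fin: "finite {Q. lead_coeff Q = 1 \<and> irreducible Q \<and> Q dvd D'}" .
    have "{Q. lead_coeff Q = 1 \<and> irreducible Q \<and> Q dvd D} \<subseteq>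
        insert Q0 {Q. lead_coeff Q = 1 \<and> irreducible Q \<and> Q dvd D'}"
    proof
      fix Q assume "Q \<in> {Q. lead_coeff Q = 1 \<and> irreducible Q \<and> Q dvd D}"
      hence Q: "lead_coeff Q = 1" "irreducible Q" "Q dvd Q0 * D'" using D' by auto
      hence "Q dvd Q0 \<or> Q dvd D'" using irr_prime[OF Q(2)] prime_elem_dvd_multD by blast
      thus "Q \<in> insert Q0 {Q. lead_coeff Q = 1 \<and> irreducible Q \<and> Q dvd D'}"
        using monic_irr_dvd_eq[OF Q(1) Q0(1) Q(2) Q0(2)] Q by auto
    qed
    thus ?thesis using fin finite_subset by blast
  qed
qed

lemma finite_support:
  fixes F :: "'b::field poly fract"
  shows "finite {Q. lead_coeff Q = 1 \<and> irreducible Q \<and> cQ Q F j \<noteq> 0}"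
proof (cases F)
  fix N D assume F: "F = Fract N D" "D \<noteq> 0"
  have "{Q. lead_coeff Q = 1 \<and> irreducible Q \<and> cQ Q F j \<noteq> 0} \<subseteq>
      {Q. lead_coeff Q = 1 \<and> irreducible Q \<and> Q dvd D}"
    using cQ_support[OF _ F] by blast
  thus ?thesis using finite_monic_irr_divisors[OF F(2)] finite_subset by blast
qed

lemma cQ_Tm:
  assumes q: "q \<noteq> 0" and irr: "irreducible Q"
  shows "cQ (Tm q z Q) (TK q z F) j = Tm q z (cQ Q F j)"
  unfolding TK_def
  by (rule cQ_transport[OF Tm_irh[OF q] Tm_irh[OF q] Tm_inv[OF q] Tm_inv'[OF q] degree_Tm[OF q] irr])

lemma Sum_any_shift:
  fixes s :: "'i::ab_group_add \<Rightarrow> 'r::comm_monoid_add"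
  shows "Sum_any (\<lambda>z. s (z - w)) = Sum_any s"
proof -
  have "bij (\<lambda>z::'i. z - w)" by (rule bijI') (auto intro: exI[of _ "_ + w"])
  thus ?thesis by (rule Sum_any.reindex_cong[symmetric]) (simp add: o_def)
qed

lemma Sum_any_hom:
  fixes s :: "'i \<Rightarrow> 'r::comm_ring_1"
  assumes h: "inj_ring_hom h" and fin: "finite {z. s z \<noteq> 0}"
  shows "Sum_any (\<lambda>z. h (s z)) = h (Sum_any s)"
proof -
  have "Sum_any (\<lambda>z. h (s z)) = sum (\<lambda>z. h (s z)) {z. s z \<noteq> 0}"
    by (rule Sum_any.expand_superset[OF fin]) (auto simp: irh_0[OF h])
  also have "\<dots> = h (sum s {z. s z \<noteq> 0})" by (simp add: irh_sum[OF h])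
  also have "sum s {z. s z \<noteq> 0} = Sum_any s" by (simp add: Sum_any.expand_set)
  finally show ?thesis .
qed

lemma fin_orbit_support:
  fixes Q :: "'i \<Rightarrow> 'b::field poly"
  assumes inj: "inj Q" and mon: "\<And>z. lead_coeff (Q z) = 1" and irr: "\<And>z. irreducible (Q z)"
  shows "finite {z. cQ (Q z) F m \<noteq> 0}"
proof -
  have "{z. cQ (Q z) F m \<noteq> 0} = Q -` {P. lead_coeff P = 1 \<and> irreducible P \<and> cQ P F m \<noteq> 0}"
    using mon irr by auto
  thus ?thesis using finite_vimageI[OF finite_support inj] by simp
qed

section \<open>Orbit sums\<close>

locale orbit =
  fixes q :: "'a::field" and P :: "'a poly fract poly" and m :: nat
  assumes q: "q \<noteq> 0" and irrP: "irreducible P" and monP: "lead_coeff P = 1"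
begin

lemma irr_orbit: "irreducible (Tm q z P)" by (rule irreducible_Tm[OF q irrP])
lemma mon_orbit: "lead_coeff (Tm q z P) = 1" by (rule monic_Tm[OF q monP])

lemma orbit_shift: "Tm q z P = Tm q w (Tm q (z - w) P)"
  by (simp add: Tm_comp[OF q])

lemma cQ_orbit_TK: "cQ (Tm q z P) (TK q w F) m = Tm q w (cQ (Tm q (z - w) P) F m)"
  by (subst orbit_shift[of z w], rule cQ_Tm[OF q irr_orbit])

lemma orbit_neq_regular:
  assumes "Tm q z P \<noteq> P" and "degree a < degree P"
  shows "cQ (Tm q z P) (Fract a (P ^ k)) j = 0"
proof -
  have "\<not> Tm q z P dvd P ^ k"
  proof
    assume "Tm q z P dvd P ^ k"
    hence "Tm q z P dvd P"
      using prime_elem_dvd_power[OF irr_prime[OF irr_orbit]] by blast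
    thus False using monic_irr_dvd_eq[OF mon_orbit monP irr_orbit irrP] assms(1) by blast
  qed
  moreover have "P ^ k \<noteq> 0" using irrP by (auto simp: irreducible_def)
  ultimately have "regQ (Tm q z P) (Fract a (P ^ k))" by (simp add: regQ_Fract)
  thus ?thesis using cQ_reg[OF irr_orbit] by simp
qed

end

locale orbit_free = orbit +
  assumes free: "\<And>z. Tm q z P = P \<Longrightarrow> z = 0"
begin

definition Psi :: "'a poly fract poly fract \<Rightarrow> 'a poly fract poly" where
  "Psi F = Sum_any (\<lambda>z. Tm q (- z) (cQ (Tm q z P) F m))"

lemma inj_orbit: "inj (\<lambda>z. Tm q z P)"
proof (rule injI)
  fix z w assume "Tm q z P = Tm q w P"
  hence "Tm q (- w) (Tm q z P) = Tm q (- w) (Tm q w P)" by simp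
  hence "Tm q (z - w) P = P" by (simp add: Tm_comp[OF q] Tm_zero)
  thus "z = w" using free by fastforce
qed

lemma fin: "finite {z. cQ (Tm q z P) F m \<noteq> 0}"
  by (rule fin_orbit_support[OF inj_orbit mon_orbit irr_orbit])

lemma fin': "finite {z. Tm q (- z) (cQ (Tm q z P) F m) \<noteq> 0}"
  by (rule finite_subset[OF _ fin[of F]]) (auto simp: irh_0[OF Tm_irh[OF q]])

lemma Psi_add: "Psi (F + G) = Psi F + Psi G"
  unfolding Psi_def
  by (simp add: cQ_add[OF irr_orbit] irh_add[OF Tm_irh[OF q]] Sum_any.distrib[OF fin' fin'])

lemma Psi_uminus: "Psi (- F) = - Psi F"
proof -
  have "Psi (- F) + Psi F = Psi (- F + F)" by (simp only: Psi_add)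
  also have "Psi (- F + F) = 0"
    unfolding Psi_def by (simp add: cQ_reg[OF irr_orbit regQ_0[OF irr_not_unit[OF irr_orbit]]] irh_0[OF Tm_irh[OF q]])
  finally show ?thesis by (simp add: eq_neg_iff_add_eq_0)
qed

lemma Psi_diff: "Psi (F - G) = Psi F - Psi G"
  using Psi_add[of F "- G"] Psi_uminus[of G] by simp

lemma Psi_TK: "Psi (TK q w F) = Psi F"
proof -
  have "Psi (TK q w F) = Sum_any (\<lambda>z. Tm q (- (z - w)) (cQ (Tm q (z - w) P) F m))"
    unfolding Psi_def cQ_orbit_TK by (simp add: Tm_comp[OF q] algebra_simps)
  also have "\<dots> = Psi F" unfolding Psi_def by (rule Sum_any_shift)
  finally show ?thesis .
qed

end

locale orbit_tau = orbit +
  assumes tauP: "Tm q (1, 0) P = P"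
    and freeY: "\<And>t. Tm q (0, t) P = P \<Longrightarrow> t = 0"
begin

definition Psi :: "'a poly fract poly fract \<Rightarrow> 'a poly fract poly" where
  "Psi F = Sum_any (\<lambda>t. Tm q (0, - t) (cQ (Tm q (0, t) P) F m))"

lemma inj_orbit: "inj (\<lambda>t. Tm q (0, t) P)"
proof (rule injI)
  fix z w assume "Tm q (0, z) P = Tm q (0, w) P"
  hence "Tm q (0, - w) (Tm q (0, z) P) = Tm q (0, - w) (Tm q (0, w) P)" by simp
  hence "Tm q (0, z - w) P = P" using Tm_zero[of q P] by (simp add: Tm_comp[OF q] zero_prod_def)
  thus "z = w" using freeY by fastforce
qed

lemma fin: "finite {t. cQ (Tm q (0, t) P) F m \<noteq> 0}"
  by (rule fin_orbit_support[OF inj_orbit mon_orbit irr_orbit])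

lemma fin': "finite {t. Tm q (0, - t) (cQ (Tm q (0, t) P) F m) \<noteq> 0}"
  by (rule finite_subset[OF _ fin[of F]]) (auto simp: irh_0[OF Tm_irh[OF q]])

lemma Psi_add: "Psi (F + G) = Psi F + Psi G"
  unfolding Psi_def
  by (simp add: cQ_add[OF irr_orbit] irh_add[OF Tm_irh[OF q]] Sum_any.distrib[OF fin' fin'])

lemma Psi_uminus: "Psi (- F) = - Psi F"
proof -
  have "Psi (- F) + Psi F = Psi (- F + F)" by (simp only: Psi_add)
  also have "Psi (- F + F) = 0"
    unfolding Psi_def by (simp add: cQ_reg[OF irr_orbit regQ_0[OF irr_not_unit[OF irr_orbit]]] irh_0[OF Tm_irh[OF q]])
  finally show ?thesis by (simp add: eq_neg_iff_add_eq_0)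
qed

lemma Psi_diff: "Psi (F - G) = Psi F - Psi G"
  using Psi_add[of F "- G"] Psi_uminus[of G] by simp

lemma Psi_sig: "Psi (TK q (0, 1) F) = Psi F"
proof -
  have "Psi (TK q (0, 1) F) = Sum_any (\<lambda>t. Tm q (0, - (t - 1)) (cQ (Tm q (0, t - 1) P) F m))"
    unfolding Psi_def cQ_orbit_TK by (simp add: Tm_comp[OF q] algebra_simps)
  also have "\<dots> = Psi F" unfolding Psi_def by (rule Sum_any_shift)
  finally show ?thesis .
qed

lemma tau_inv: "Tm q (-1, 0) P = P"
  using Tm_inv[OF q, of "(1, 0)" P] tauP by simp

lemma Psi_tau: "Psi (TK q (1, 0) F) = Tm q (1, 0) (Psi F)"
proof -
  have e: "Tm q ((0, t) - (1, 0)) P = Tm q (0, t) P" for t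
  proof -
    have "Tm q ((0, t) - (1, 0)) P = Tm q (0, t) (Tm q (-1, 0) P)" by (simp add: Tm_comp[OF q])
    thus ?thesis by (simp add: tau_inv)
  qed
  have c: "Tm q (0, - t) (Tm q (1, 0) x) = Tm q (1, 0) (Tm q (0, - t) x)" for t x
    by (simp add: Tm_comp[OF q])
  have "Psi (TK q (1, 0) F) = Sum_any (\<lambda>t. Tm q (1, 0) (Tm q (0, - t) (cQ (Tm q (0, t) P) F m)))"
    unfolding Psi_def cQ_orbit_TK e c ..
  also have "\<dots> = Tm q (1, 0) (Psi F)"
    unfolding Psi_def by (rule Sum_any_hom[OF Tm_irh[OF q] fin'])
  finally show ?thesis .
qed

end

lemma pow_inj:
  fixes u :: "'a::field"
  assumes u0: "u \<noteq> 0" and nr: "\<forall>n::nat. n > 0 \<longrightarrow> u ^ n \<noteq> 1" and e: "u ^ i = u ^ j"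
  shows "i = j"
proof (rule ccontr)
  assume ne: "i \<noteq> j"
  { fix a b :: nat assume ab: "a < b" "u ^ a = u ^ b"
    have "u ^ b = u ^ a * u ^ (b - a)" using ab(1) by (simp add: power_add[symmetric])
    hence "u ^ (b - a) = 1" using ab(2) u0 by simp
    hence False using nr ab(1) by auto }
  thus False using ne e by (metis linorder_neqE_nat)
qed

lemma min_rep:
  fixes c :: "'b::field poly fract"
  obtains N D where "D \<noteq> 0" "c = Fract N D" "\<And>N' D'. D' \<noteq> 0 \<Longrightarrow> c = Fract N' D' \<Longrightarrow> degree D \<le> degree D'"
proof -
  have ex: "\<exists>n N D. D \<noteq> 0 \<and> c = Fract N D \<and> degree D = n" by (cases c) auto
  define n where "n = (LEAST n. \<exists>N D. D \<noteq> 0 \<and> c = Fract N D \<and> degree D = n)"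
  from LeastI_ex[OF ex] obtain N D where ND: "D \<noteq> 0" "c = Fract N D" "degree D = n"
    unfolding n_def by blast
  have "degree D \<le> degree D'" if "D' \<noteq> 0" "c = Fract N' D'" for N' D'
    unfolding ND(3) n_def by (rule Least_le) (use that in blast)
  thus ?thesis using that ND by blast
qed

lemma coprime_rep:
  fixes c :: "'b::field poly fract"
  obtains N D u v where "D \<noteq> 0" "c = Fract N D" "u * N + v * D = 1"
proof -
  obtain N D where ND: "D \<noteq> 0" "c = Fract N D"
    "\<And>N' D'. D' \<noteq> 0 \<Longrightarrow> c = Fract N' D' \<Longrightarrow> degree D \<le> degree D'" using min_rep[of c] by metis
  obtain u v g where g: "u * N + v * D = g" "g dvd N" "g dvd D" using field_poly_bezout_aux by blast
  obtain N' where N': "N = g * N'" using g(2) by (auto elim: dvdE)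
  obtain D' where D': "D = g * D'" using g(3) by (auto elim: dvdE)
  have g0: "g \<noteq> 0" and D'0: "D' \<noteq> 0" using ND(1) D' by auto
  have "c = Fract N' D'" using ND(2) N' D' g0 by (simp add: mult_fract_cancel)
  hence "degree D \<le> degree D'" using ND(3) D'0 by blast
  moreover have "degree D = degree g + degree D'" using D' g0 D'0 by (simp add: degree_mult_eq)
  ultimately have "degree g = 0" by simp
  hence "is_unit g" using g0 is_unit_iff_degree by blast
  then obtain k where k: "1 = g * k" by (auto elim: dvdE)
  have "(k * u) * N + (k * v) * D = k * (u * N + v * D)" by (simp add: algebra_simps)
  also have "\<dots> = 1" using g(1) k by (simp add: mult.commute)
  finally have "(k * u) * N + (k * v) * D = 1" .
  thus ?thesis using that ND(1,2) by blast
qed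

lemma tau_x_twist:
  fixes u \<kappa> :: "'a::field" and c :: "'a poly fract"
  assumes u0: "u \<noteq> 0" and nr: "\<forall>n::nat. n > 0 \<longrightarrow> u ^ n \<noteq> 1"
    and eq: "tau_x u c = c + to_fract [:\<kappa>:]"
  shows "\<kappa> = 0 \<and> (\<exists>k. c = to_fract [:k:])"
proof -
  obtain N D u' v' where ND: "D \<noteq> 0" "c = Fract N D" and cop: "u' * N + v' * D = 1" by (rule coprime_rep)
  define \<phi> where "\<phi> = (\<lambda>p::'a poly. p \<circ>\<^sub>p [:0, u:])"
  have ph: "inj_ring_hom \<phi>" unfolding \<phi>_def by (rule scale_irh[OF u0])
  have cphi: "coeff (\<phi> p) i = u ^ i * coeff p i" for p i unfolding \<phi>_def by (rule coeff_pcompose_linear)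
  have degphi: "degree (\<phi> p) = degree p" for p unfolding \<phi>_def using u0 by (simp add: degree_pcompose)
  have phD0: "\<phi> D \<noteq> 0" using ND(1) irh_zero_iff[OF ph] by simp
  have "Fract (\<phi> N) (\<phi> D) = Fract (N + [:\<kappa>:] * D) D"
    using eq ND unfolding \<phi>_def by (simp add: tau_x_Fract u0 to_fract_def)
  hence key: "\<phi> N * D = (N + [:\<kappa>:] * D) * \<phi> D" using phD0 ND(1) by (simp add: eq_fract)
  have cop': "\<phi> u' * \<phi> N + \<phi> v' * \<phi> D = 1"
    using arg_cong[OF cop, of \<phi>] by (simp add: irh_add[OF ph] irh_mult[OF ph] irh_1[OF ph])
  have "\<phi> D dvd D"
  proof -
    have "D = \<phi> u' * (\<phi> N * D) + (D * \<phi> v') * \<phi> D"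
      using arg_cong[OF cop', of "\<lambda>x. D * x"] by (simp add: algebra_simps)
    also have "\<dots> = \<phi> u' * ((N + [:\<kappa>:] * D) * \<phi> D) + (D * \<phi> v') * \<phi> D" by (simp only: key)
    finally show ?thesis by (metis dvd_add dvd_mult dvd_triv_right)
  qed
  then obtain w where w: "D = \<phi> D * w" by (auto elim: dvdE)
  have w0: "w \<noteq> 0" using w ND(1) by auto
  have "degree D = degree D + degree w" using w phD0 w0 degphi[of D]
    by (metis degree_mult_eq)
  hence "degree w = 0" by simp
  then obtain w0c where w0c: "w = [:w0c:]" by (rule degree_eq_zeroE)
  define e where "e = degree D"
  have cD: "coeff D i = w0c * u ^ i * coeff D i" for i
  proof -
    have "coeff D i = coeff (\<phi> D * [:w0c:]) i" using w w0c by simp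
    also have "\<phi> D * [:w0c:] = smult w0c (\<phi> D)" by (simp add: mult.commute)
    also have "coeff \<dots> i = coeff (\<phi> D) i * w0c" by (simp add: mult.commute)
    finally show ?thesis by (simp add: cphi algebra_simps)
  qed
  have lcD: "coeff D e \<noteq> 0" unfolding e_def using ND(1) by simp
  have we: "w0c * u ^ e = 1" using cD[of e] lcD by (metis mult_cancel_right1 mult.commute)
  have Dz: "coeff D i = 0" if "i \<noteq> e" for i
  proof (rule ccontr)
    assume nz: "coeff D i \<noteq> 0"
    hence "w0c * u ^ i = 1" using cD[of i] by (metis mult_cancel_right1 mult.commute)
    hence "u ^ i = u ^ e" using we by (metis mult_left_cancel mult_zero_left one_neq_zero)
    thus False using pow_inj[OF u0 nr] that by blast
  qed
  have phD: "\<phi> D = smult (u ^ e) D"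
  proof (rule poly_eqI)
    fix i show "coeff (\<phi> D) i = coeff (smult (u ^ e) D) i" by (cases "i = e") (simp_all add: cphi Dz)
  qed
  have "\<phi> N * D = smult (u ^ e) (N + [:\<kappa>:] * D) * D" using key phD by (simp only: mult_smult_right mult_smult_left)
  hence phN: "\<phi> N = smult (u ^ e) (N + [:\<kappa>:] * D)" using ND(1) mult_right_cancel by blast
  have cN: "u ^ i * coeff N i = u ^ e * (coeff N i + \<kappa> * coeff D i)" for i
    using arg_cong[OF phN, of "\<lambda>p. coeff p i"] by (simp add: cphi)
  have "\<kappa> * coeff D e = 0" using cN[of e] u0 by (simp add: algebra_simps)
  hence k0: "\<kappa> = 0" using lcD by simp
  have Nz: "coeff N i = 0" if "i \<noteq> e" for i
  proof (rule ccontr)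
    assume "coeff N i \<noteq> 0"
    hence "u ^ i = u ^ e" using cN[of i] Dz[OF that] by simp
    thus False using pow_inj[OF u0 nr] that by blast
  qed
  have Nm: "N = monom (coeff N e) e" by (rule poly_eqI) (auto simp: coeff_monom Nz)
  have Dm: "D = monom (coeff D e) e" by (rule poly_eqI) (auto simp: coeff_monom Dz)
  have "c = to_fract [:coeff N e / coeff D e:]"
  proof -
    have "N * 1 = [:coeff N e / coeff D e:] * D"
      using lcD by (subst Nm, subst (2) Dm) (simp add: smult_monom)
    thus ?thesis using ND by (simp add: to_fract_def eq_fract)
  qed
  thus ?thesis using k0 by blast
qed

lemma coeff_shift:
  fixes p :: "'c::idom poly"
  shows "degree p = Suc n \<Longrightarrow> coeff (p \<circ>\<^sub>p [:t, 1:]) n = coeff p n + of_nat (Suc n) * t * lead_coeff p"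
proof (induction p arbitrary: n)
  case 0 thus ?case by simp
next
  case (pCons a p')
  have p'0: "p' \<noteq> 0" using pCons.prems by auto
  hence dp: "degree (pCons a p') = Suc (degree p')" by simp
  hence n: "n = degree p'" using pCons.prems by simp
  define X where "X = p' \<circ>\<^sub>p [:t, 1:]"
  have dX: "degree X = n" unfolding X_def n by (simp add: degree_pcompose)
  have lX: "lead_coeff X = lead_coeff p'" unfolding X_def by (simp add: lead_coeff_comp)
  have eq: "pCons a p' \<circ>\<^sub>p [:t, 1:] = [:a:] + smult t X + pCons 0 X"
    unfolding X_def by (simp add: pcompose_pCons algebra_simps)
  have lc: "lead_coeff (pCons a p') = lead_coeff p'" using dp by simp
  show ?case
  proof (cases n)
    case 0
    thus ?thesis using dX lX lc by (simp add: eq)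
  next
    case (Suc k)
    have IH: "coeff X k = coeff p' k + of_nat (Suc k) * t * lead_coeff p'"
      unfolding X_def by (rule pCons.IH) (use n Suc in simp)
    have "coeff X n = lead_coeff p'" using dX lX by simp
    thus ?thesis using Suc IH lc by (simp add: eq algebra_simps)
  qed
qed

lemma const_hom_irh: "inj_ring_hom (\<lambda>x::'a::field. to_fract [:x:])"
  unfolding inj_ring_hom_def
proof (intro conjI allI impI)
  fix x y :: 'a
  have "[:x + y:] = [:x:] + [:y:]" by simp
  thus "to_fract [:x + y:] = to_fract [:x:] + to_fract [:y:]" by (metis to_fract_add)
  have "[:x * y:] = [:x:] * [:y:]" by simp
  thus "to_fract [:x * y:] = to_fract [:x:] * to_fract [:y:]" by (metis to_fract_mult)
  show "to_fract [:1::'a:] = 1" by (simp add: one_pCons[symmetric])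
  fix z :: 'a assume "to_fract [:z:] = 0" thus "z = 0" by simp
qed

lemma to_fract_const_of_int: "to_fract [:of_int z :: 'a::field:] = of_int z"
  by (rule irh_of_int[OF const_hom_irh])

lemma powi_not_root:
  fixes q :: "'a::field"
  assumes q0: "q \<noteq> 0" and nr: "\<forall>n::nat. n > 0 \<longrightarrow> q ^ n \<noteq> 1" and z: "z \<noteq> 0"
  shows "q powi z \<noteq> 1"
proof (cases "z > 0")
  case True
  hence "q powi z = q ^ nat z" by (metis power_int_of_nat int_nat_eq less_le)
  thus ?thesis using nr True by auto
next
  case False
  hence "z = - int (nat (- z))" "nat (- z) > 0" using z by auto
  hence "q powi z = inverse (q ^ nat (- z))" by (metis power_int_minus power_int_of_nat)
  thus ?thesis using nr \<open>nat (- z) > 0\<close> by (metis inverse_1 inverse_inverse_eq)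
qed

lemma stab:
  fixes q :: "'a::field_char_0" and P :: "'a poly fract poly"
  assumes q0: "q \<noteq> 0" and nr: "\<forall>n::nat. n > 0 \<longrightarrow> q ^ n \<noteq> 1"
    and monP: "lead_coeff P = 1" and dP: "degree P > 0" and st: "Tm q (s, t) P = P"
  shows "t = 0 \<and> (s = 0 \<or> (\<forall>i. \<exists>k. coeff P i = to_fract [:k:]))"
proof -
  obtain n where n: "degree P = Suc n" using dP by (cases "degree P") auto
  define u where "u = q powi s"
  have u0: "u \<noteq> 0" unfolding u_def using q0 by simp
  have tu: "inj_ring_hom (tau_x u)" by (rule tau_x_irh[OF u0])
  define c where "c = coeff P n"
  define \<kappa> :: 'a where "\<kappa> = - (of_nat (Suc n) * of_int t)"
  have "coeff (Tm q (s, t) P) n = tau_x u (coeff (P \<circ>\<^sub>p [:of_int t, 1:]) n)"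
    unfolding Tm_def u_def by (simp add: coeff_map_poly irh_0[OF tau_x_irh] q0)
  also have "\<dots> = tau_x u (c + of_nat (Suc n) * of_int t)"
    using coeff_shift[OF n, of "of_int t"] monP by (simp add: c_def)
  also have "\<dots> = tau_x u c + of_nat (Suc n) * of_int t"
    by (simp add: irh_add[OF tu] irh_mult[OF tu] irh_of_nat[OF tu] irh_of_int[OF tu] irh_1[OF tu])
  finally have h1: "tau_x u c + of_nat (Suc n) * of_int t = c" using st by (simp add: c_def)
  have h2: "to_fract [:\<kappa>:] = - (of_nat (Suc n) * of_int t)"
    unfolding \<kappa>_def using to_fract_const_of_int[of "- (int (Suc n) * t)"]
    by (simp del: of_nat_Suc)
  define X :: "'a poly fract" where "X = of_nat (Suc n) * of_int t"
  have h1': "tau_x u c + X = c" using h1 unfolding X_def .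
  have h2': "to_fract [:\<kappa>:] = - X" using h2 unfolding X_def .
  have tw: "tau_x u c = c + to_fract [:\<kappa>:]"
    using h1' unfolding h2' by (simp add: eq_diff_eq[symmetric])
  show ?thesis
  proof (cases "s = 0")
    case True
    hence "u = 1" by (simp add: u_def)
    hence "to_fract [:\<kappa>:] = 0" using tw by (simp add: tau_x_1)
    hence "\<kappa> = 0" by simp
    hence "t = 0" unfolding \<kappa>_def by (simp del: of_nat_Suc)
    thus ?thesis using True by simp
  next
    case False
    have nru: "\<forall>k::nat. k > 0 \<longrightarrow> u ^ k \<noteq> 1"
    proof (intro allI impI)
      fix k :: nat assume "k > 0"
      have "u ^ k = q powi (s * int k)" unfolding u_def by (rule power_int_power')
      thus "u ^ k \<noteq> 1" using powi_not_root[OF q0 nr, of "s * int k"] False \<open>k > 0\<close> by simp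
    qed
    have "\<kappa> = 0" using tau_x_twist[OF u0 nru tw] by blast
    hence t0: "t = 0" unfolding \<kappa>_def by (simp del: of_nat_Suc)
    have "\<exists>k. coeff P i = to_fract [:k:]" for i
    proof -
      have "coeff (Tm q (s, t) P) i = tau_x u (coeff P i)"
        unfolding Tm_def u_def t0 by (simp add: coeff_map_poly irh_0[OF tau_x_irh] q0)
      hence "tau_x u (coeff P i) = coeff P i + to_fract [:0:]" using st by simp
      thus ?thesis using tau_x_twist[OF u0 nru] by blast
    qed
    thus ?thesis using t0 by blast
  qed
qed

lemma Tm_tau_const:
  assumes q0: "q \<noteq> 0" and c: "\<forall>i. \<exists>k. coeff P i = to_fract [:k:]"
  shows "Tm q (1, 0) P = P"
proof (rule poly_eqI)
  fix i
  obtain k where k: "coeff P i = to_fract [:k:]" using c by blast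
  show "coeff (Tm q (1, 0) P) i = coeff P i"
    unfolding Tm_def using q0 by (simp add: coeff_map_poly irh_0[OF tau_x_irh] k tau_x_const)
qed

lemma clear_denoms:
  fixes A :: "'b::idom fract poly"
  shows "\<exists>\<alpha> A'. \<alpha> \<noteq> 0 \<and> smult (to_fract \<alpha>) A = map_poly to_fract A'"
proof (induction A)
  case 0 show ?case by (intro exI[of _ 1] exI[of _ 0]) simp
next
  case (pCons c A1)
  from pCons.IH obtain \<alpha>1 A1' where IH: "\<alpha>1 \<noteq> 0" "smult (to_fract \<alpha>1) A1 = map_poly to_fract A1'" by blast
  obtain n \<delta> where c: "c = Fract n \<delta>" "\<delta> \<noteq> 0" by (cases c)
  have e1: "to_fract (\<delta> * \<alpha>1) * c = to_fract (\<alpha>1 * n)"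
    using c by (simp add: to_fract_def eq_fract algebra_simps)
  have e2: "smult (to_fract (\<delta> * \<alpha>1)) A1 = map_poly to_fract (smult \<delta> A1')"
  proof -
    have "smult (to_fract (\<delta> * \<alpha>1)) A1 = smult (to_fract \<delta>) (smult (to_fract \<alpha>1) A1)"
      by (simp add: smult_smult)
    also have "\<dots> = map_poly to_fract (smult \<delta> A1')" using IH(2) by simp
    finally show ?thesis .
  qed
  have "smult (to_fract (\<delta> * \<alpha>1)) (pCons c A1) = map_poly to_fract (pCons (\<alpha>1 * n) (smult \<delta> A1'))"
    using e1 e2 by (simp add: map_poly_pCons)
  moreover have "\<delta> * \<alpha>1 \<noteq> 0" using c IH by simp
  ultimately show ?case by blast
qed

lemma gauss_prime:
  fixes A B :: "'b::idom poly"
  assumes p: "prime_elem \<pi>" and ab: "\<forall>i. \<pi> dvd coeff (A * B) i"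
  shows "(\<forall>i. \<pi> dvd coeff A i) \<or> (\<forall>i. \<pi> dvd coeff B i)"
proof (rule ccontr)
  assume "\<not> ?thesis"
  then obtain i0 j0 where "\<not> \<pi> dvd coeff A i0" "\<not> \<pi> dvd coeff B j0" by blast
  define i where "i = (LEAST i. \<not> \<pi> dvd coeff A i)"
  define j where "j = (LEAST j. \<not> \<pi> dvd coeff B j)"
  have ni: "\<not> \<pi> dvd coeff A i" unfolding i_def by (rule LeastI[of _ i0]) fact
  have nj: "\<not> \<pi> dvd coeff B j" unfolding j_def by (rule LeastI[of _ j0]) fact
  have li: "\<pi> dvd coeff A k" if "k < i" for k using not_less_Least[OF that[unfolded i_def]] i_def by blast
  have lj: "\<pi> dvd coeff B k" if "k < j" for k using not_less_Least[OF that[unfolded j_def]] j_def by blast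
  have "coeff (A * B) (i + j) = (\<Sum>k\<le>i + j. coeff A k * coeff B (i + j - k))" by (rule coeff_mult)
  also have "\<dots> = coeff A i * coeff B j + (\<Sum>k\<in>{..i + j} - {i}. coeff A k * coeff B (i + j - k))"
    by (subst sum.remove[of _ i]) auto
  finally have eq: "coeff (A * B) (i + j) = coeff A i * coeff B j + (\<Sum>k\<in>{..i + j} - {i}. coeff A k * coeff B (i + j - k))" .
  have "\<pi> dvd (\<Sum>k\<in>{..i + j} - {i}. coeff A k * coeff B (i + j - k))"
  proof (rule dvd_sum)
    fix k assume "k \<in> {..i + j} - {i}"
    hence "k < i \<or> (i < k \<and> k \<le> i + j)" by auto
    thus "\<pi> dvd coeff A k * coeff B (i + j - k)"
    proof
      assume "k < i" thus ?thesis using li by simp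
    next
      assume "i < k \<and> k \<le> i + j"
      hence "i + j - k < j" by arith
      thus ?thesis using lj by simp
    qed
  qed
  moreover have "\<pi> dvd coeff (A * B) (i + j)" using ab by blast
  ultimately have "\<pi> dvd coeff A i * coeff B j" using eq by (metis dvd_add_left_iff)
  thus False using prime_elem_dvd_multD[OF p] ni nj by blast
qed

lemma exists_irr_factor:
  fixes p :: "'b::field poly"
  shows "degree p > 0 \<Longrightarrow> \<exists>\<pi>. irreducible \<pi> \<and> \<pi> dvd p"
proof (induction "degree p" arbitrary: p rule: less_induct)
  case less
  show ?case
  proof (cases "irreducible p")
    case True thus ?thesis by (intro exI[of _ p]) simp
  next
    case False
    have p0: "p \<noteq> 0" using less.prems by auto
    hence nu: "\<not> is_unit p" using less.prems is_unit_iff_degree[of p] by auto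
    from False p0 nu obtain a b where ab: "p = a * b" "\<not> is_unit a" "\<not> is_unit b"
      by (auto simp: irreducible_def)
    have a0: "a \<noteq> 0" and b0: "b \<noteq> 0" using ab p0 by auto
    have "degree a > 0" "degree b > 0" using ab(2,3) a0 b0 is_unit_iff_degree by auto
    moreover have "degree p = degree a + degree b" using ab(1) a0 b0 by (simp add: degree_mult_eq)
    ultimately have "degree a < degree p" by simp
    from less.hyps[OF this \<open>degree a > 0\<close>] obtain \<pi> where "irreducible \<pi>" "\<pi> dvd a" by blast
    thus ?thesis using ab(1) by auto
  qed
qed

lemma gauss_core:
  fixes d A B :: "'a::field poly poly" and c :: "'a poly"
  assumes irr: "irreducible d"
  shows "c \<noteq> 0 \<Longrightarrow> smult c d = A * B \<Longrightarrow> degree A = 0 \<or> degree B = 0"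
proof (induction "degree c" arbitrary: c A B rule: less_induct)
  case less
  show ?case
  proof (cases "degree c = 0")
    case True
    then obtain c0 where c0: "c = [:c0:]" by (rule degree_eq_zeroE)
    hence c00: "c0 \<noteq> 0" using less.prems by simp
    define c' where "c' = [:inverse c0:]"
    have "smult c' (smult c d) = d" using c00 by (simp add: c0 c'_def one_pCons[symmetric])
    hence "d = smult c' A * B" using less.prems(2) by simp
    hence "is_unit (smult c' A) \<or> is_unit B" using irreducibleD[OF irr] by blast
    moreover have "degree (smult c' A) = degree A" using c00 by (simp add: c'_def)
    moreover have dunit: "is_unit p \<Longrightarrow> degree p = 0" for p :: "'a poly poly" by (auto elim!: is_unit_polyE)
    ultimately show ?thesis by metis
  next
    case False
    then obtain \<pi> where pi: "irreducible \<pi>" "\<pi> dvd c" using exists_irr_factor[of c] by auto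
    then obtain c' where c': "c = \<pi> * c'" by (auto elim: dvdE)
    have pr: "prime_elem \<pi>" using pi(1) by (rule field_poly_irreducible_imp_prime)
    have pi0: "\<pi> \<noteq> 0" using pr by auto
    have c'0: "c' \<noteq> 0" using c' less.prems(1) by auto
    have dpi: "degree \<pi> > 0" using irr_degree[OF pi(1)] .
    have "degree c = degree \<pi> + degree c'" using c' pi0 c'0 by (simp add: degree_mult_eq)
    hence dlt: "degree c' < degree c" using dpi by simp
    have "\<forall>i. \<pi> dvd coeff (A * B) i" using less.prems(2)[symmetric] c' by simp
    hence "(\<forall>i. \<pi> dvd coeff A i) \<or> (\<forall>i. \<pi> dvd coeff B i)" by (rule gauss_prime[OF pr])
    thus ?thesis
    proof
      assume "\<forall>i. \<pi> dvd coeff A i"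
      hence "[:\<pi>:] dvd A" by (simp add: const_poly_dvd_iff)
      then obtain A'' where A'': "A = [:\<pi>:] * A''" by (auto elim: dvdE)
      have "[:\<pi>:] * smult c' d = [:\<pi>:] * (A'' * B)"
        using less.prems(2) c' A'' by (simp add: ac_simps)
      moreover have "[:\<pi>:] \<noteq> 0" using pi0 by simp
      ultimately have "smult c' d = A'' * B" using mult_left_cancel by blast
      from less.hyps[OF dlt c'0 this] show ?thesis using A'' pi0 by simp
    next
      assume "\<forall>i. \<pi> dvd coeff B i"
      hence "[:\<pi>:] dvd B" by (simp add: const_poly_dvd_iff)
      then obtain B'' where B'': "B = [:\<pi>:] * B''" by (auto elim: dvdE)
      have "[:\<pi>:] * smult c' d = [:\<pi>:] * (A * B'')"
        using less.prems(2) c' B'' by (simp add: algebra_simps)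
      moreover have "[:\<pi>:] \<noteq> 0" using pi0 by simp
      ultimately have "smult c' d = A * B''" using mult_left_cancel by blast
      from less.hyps[OF dlt c'0 this] show ?thesis using B'' pi0 by simp
    qed
  qed
qed

lemma gauss:
  fixes d :: "'a::field poly poly"
  assumes irr: "irreducible d" and dd: "degree d > 0"
  shows "irreducible (emb_xy d)"
proof (rule irreducibleI)
  have d0: "d \<noteq> 0" using irr by (auto simp: irreducible_def)
  have deg: "degree (emb_xy d) = degree d" unfolding emb_xy_def by (simp add: degree_map_poly)
  show "emb_xy d \<noteq> 0" unfolding emb_xy_def using d0 by simp
  show "\<not> is_unit (emb_xy d)" using deg dd is_unit_iff_degree[of "emb_xy d"] \<open>emb_xy d \<noteq> 0\<close> by simp
  fix A B assume AB: "emb_xy d = A * B"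
  show "is_unit A \<or> is_unit B"
  proof (rule ccontr)
    assume nu: "\<not> (is_unit A \<or> is_unit B)"
    have A0: "A \<noteq> 0" and B0: "B \<noteq> 0" using AB \<open>emb_xy d \<noteq> 0\<close> by auto
    have dA: "degree A > 0" and dB: "degree B > 0" using nu A0 B0 is_unit_iff_degree by auto
    obtain \<alpha> A' where A': "\<alpha> \<noteq> 0" "smult (to_fract \<alpha>) A = map_poly to_fract A'" using clear_denoms by blast
    obtain \<beta> B' where B': "\<beta> \<noteq> 0" "smult (to_fract \<beta>) B = map_poly to_fract B'" using clear_denoms by blast
    have "map_poly to_fract (smult (\<alpha> * \<beta>) d) = smult (to_fract \<alpha>) A * smult (to_fract \<beta>) B"
      using AB unfolding emb_xy_def by (simp add: mult_ac)
    also have "\<dots> = map_poly to_fract (A' * B')" using A' B' by simp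
    finally have "smult (\<alpha> * \<beta>) d = A' * B'" using fract_poly_eq_iff by blast
    moreover have "\<alpha> * \<beta> \<noteq> 0" using A' B' by simp
    ultimately have "degree A' = 0 \<or> degree B' = 0" by (intro gauss_core[OF irr])
    moreover have "degree A' = degree A"
      using arg_cong[OF A'(2), of degree] A'(1) by (simp add: degree_map_poly)
    moreover have "degree B' = degree B"
      using arg_cong[OF B'(2), of degree] B'(1) by (simp add: degree_map_poly)
    ultimately show False using dA dB by simp
  qed
qed

lemma to_fract_irh: "inj_ring_hom (to_fract :: 'b::idom \<Rightarrow> 'b fract)"
  unfolding inj_ring_hom_def by simp

lemma to_fract_div_pow: "D \<noteq> 0 \<Longrightarrow> to_fract a / to_fract D ^ m = Fract a (D ^ m)"
  by (simp add: irh_power[OF to_fract_irh, symmetric]) (simp add: to_fract_def)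

context orbit_free
begin

lemma Psi_pole:
  assumes da: "degree a < degree P" and m: "m > 0"
  shows "Psi (Fract a (P ^ m)) = a"
proof -
  have "(\<lambda>z. Tm q (- z) (cQ (Tm q z P) (Fract a (P ^ m)) m)) = (\<lambda>z. if z = 0 then a else 0)"
  proof (rule ext)
    fix z :: "int \<times> int"
    show "Tm q (- z) (cQ (Tm q z P) (Fract a (P ^ m)) m) = (if z = 0 then a else 0)"
    proof (cases "z = 0")
      case True thus ?thesis by (simp add: Tm_zero cQ_Fract_pow[OF irrP da m])
    next
      case False
      hence "Tm q z P \<noteq> P" using free by blast
      thus ?thesis using False by (simp add: orbit_neq_regular[OF _ da] irh_0[OF Tm_irh[OF q]])
    qed
  qed
  note eq = this
  show ?thesis unfolding Psi_def eq by (rule Sum_any.delta)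
qed

end

context orbit_tau
begin

lemma Psi_pole:
  assumes da: "degree a < degree P" and m: "m > 0"
  shows "Psi (Fract a (P ^ m)) = a"
proof -
  have "(\<lambda>t. Tm q (0, - t) (cQ (Tm q (0, t) P) (Fract a (P ^ m)) m)) = (\<lambda>t. if t = 0 then a else 0)"
  proof (rule ext)
    fix t :: int
    show "Tm q (0, - t) (cQ (Tm q (0, t) P) (Fract a (P ^ m)) m) = (if t = 0 then a else 0)"
    proof (cases "t = 0")
      case True thus ?thesis using Tm_zero[of q] by (simp add: zero_prod_def cQ_Fract_pow[OF irrP da m])
    next
      case False
      hence "Tm q (0, t) P \<noteq> P" using freeY by blast
      thus ?thesis using False by (simp add: orbit_neq_regular[OF _ da] irh_0[OF Tm_irh[OF q]])
    qed
  qed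
  note eq = this
  show ?thesis unfolding Psi_def eq by (rule Sum_any.delta)
qed

end

lemma exact_TK: "exact q F \<longleftrightarrow> (\<exists>g h. F = (TK q (1, 0) g - g) + (TK q (0, 1) h - h))"
  unfolding exact_def DeltaX_def DeltaY_def tauK_TK sigK_TK[of q] ..

lemma Tm_smult_tau:
  assumes q0: "q \<noteq> 0" and c: "tau_x q c = c"
  shows "Tm q (1, 0) (smult c p) = smult c (Tm q (1, 0) p)"
  unfolding Tm_def
  by (rule poly_eqI) (simp add: coeff_map_poly irh_0[OF tau_x_irh[OF q0]] irh_mult[OF tau_x_irh[OF q0]] c)

theorem lemma4:
  fixes q :: "'a::field_char_0"
    and m :: nat
    and d :: "'a poly poly"
    and a :: "'a poly fract poly"
  assumes "q \<noteq> 0"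
    and "\<forall>n::nat. n > 0 \<longrightarrow> q ^ n \<noteq> 1"
    and "irreducible d"
    and "m > 0"
    and "a \<noteq> 0"
    and "degree a < degree d"
  shows "exact q (to_fract a / (to_fract (emb_xy d)) ^ m) \<longleftrightarrow>
           ((\<forall>i. degree (coeff d i) = 0) \<and>
            (\<exists>b :: 'a poly fract poly. to_fract a = DeltaX q (to_fract b)))"
proof -
  note q0 = assms(1) and nr = assms(2) and irrd = assms(3) and m = assms(4) and a0 = assms(5)
    and da = assms(6)
  have dd: "degree d > 0" using da by simp
  have d0: "d \<noteq> 0" using dd by auto
  define D where "D = emb_xy d"
  have degD: "degree D = degree d" unfolding D_def emb_xy_def by (simp add: degree_map_poly)
  have D0: "D \<noteq> 0" unfolding D_def emb_xy_def using d0 by simp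
  have irrD: "irreducible D" unfolding D_def by (rule gauss[OF irrd dd])
  have coeffD: "coeff D i = to_fract (coeff d i)" for i unfolding D_def emb_xy_def by (simp add: coeff_map_poly)
  have f_eq: "to_fract a / to_fract (emb_xy d) ^ m = Fract a (D ^ m)"
    unfolding D_def[symmetric] by (rule to_fract_div_pow[OF D0])
  have TD: "TK q (1, 0) (Fract b (D ^ m)) = Fract (Tm q (1, 0) b) (Tm q (1, 0) D ^ m)" for b
    using D0 by (simp add: TK_Fract[OF q0] irh_power[OF Tm_irh[OF q0]])
  have DX: "DeltaX q (to_fract b) = to_fract (Tm q (1, 0) b - b)" for b
    unfolding DeltaX_def tauK_TK TK_def by (simp add: fl_to_fract[OF Tm_irh[OF q0]])
  show ?thesis
  proof
    assume ex: "exact q (to_fract a / to_fract (emb_xy d) ^ m)"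
    define l where "l = lead_coeff D"
    have l0: "l \<noteq> 0" unfolding l_def using D0 by simp
    define P where "P = smult (inverse l) D"
    have DP: "D = smult l P" unfolding P_def using l0 by simp
    have monP: "lead_coeff P = 1" unfolding P_def l_def using l0 by (simp add: l_def)
    have degP: "degree P = degree D" unfolding P_def using l0 by simp
    have "inverse l dvd 1" by (rule dvdI[of _ _ l]) (simp add: l0)
    hence "is_unit [:inverse l:]" by (simp add: is_unit_const_poly_iff)
    moreover have "P = [:inverse l:] * D" unfolding P_def by simp
    ultimately have irrP: "irreducible P" using irrD irreducible_mult_unit_left by metis
    have dPpos: "degree P > 0" using degP degD dd by simp
    define a1 where "a1 = smult (inverse (l ^ m)) a"
    have aa1: "a = smult (l ^ m) a1" unfolding a1_def using l0 by simp
    have a10: "a1 \<noteq> 0" using a0 aa1 by auto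
    have da1: "degree a1 < degree P" unfolding a1_def degP degD using l0 da by simp
    have P0: "P \<noteq> 0" using irrP by (auto simp: irreducible_def)
    have f1: "Fract a (D ^ m) = Fract a1 (P ^ m)"
    proof -
      have Dm: "D ^ m = smult (l ^ m) (P ^ m)" unfolding DP by (rule smult_power)
      have "a * P ^ m = smult (l ^ m) (a1 * P ^ m)" unfolding aa1 by (rule mult_smult_left)
      also have "\<dots> = a1 * D ^ m" unfolding Dm by (rule mult_smult_right[symmetric])
      finally have "a * P ^ m = a1 * D ^ m" .
      moreover have "D ^ m \<noteq> 0" "P ^ m \<noteq> 0" using D0 P0 by simp_all
      ultimately show ?thesis by (simp add: eq_fract)
    qed
    from ex obtain g h where gh: "Fract a1 (P ^ m) = (TK q (1, 0) g - g) + (TK q (0, 1) h - h)"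
      unfolding f_eq f1 exact_TK by blast
    interpret orbit q P m by unfold_locales (fact q0 irrP monP)+
    have tauP: "Tm q (1, 0) P = P"
    proof (rule ccontr)
      assume nt: "Tm q (1, 0) P \<noteq> P"
      interpret orbit_free q P m
      proof unfold_locales
        fix z assume st: "Tm q z P = P"
        obtain s t where z: "z = (s, t)" by fastforce
        from stab[OF q0 nr monP dPpos st[unfolded z]] have "t = 0 \<and> s = 0"
          using Tm_tau_const[OF q0] nt by blast
        thus "z = 0" using z by (simp add: zero_prod_def)
      qed
      have "orbit_free.Psi q P m (Fract a1 (P ^ m)) = 0"
        unfolding gh by (simp add: Psi_add Psi_diff Psi_TK)
      moreover have "orbit_free.Psi q P m (Fract a1 (P ^ m)) = a1" by (rule Psi_pole[OF da1 m])
      ultimately show False using a10 by simp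
    qed
    interpret orbit_tau q P m
    proof unfold_locales
      show "Tm q (1, 0) P = P" by (fact tauP)
      fix t assume "Tm q (0, t) P = P"
      from stab[OF q0 nr monP dPpos this] show "t = 0" by blast
    qed
    define b1 where "b1 = orbit_tau.Psi q P m g"
    have "orbit_tau.Psi q P m (Fract a1 (P ^ m)) = Tm q (1, 0) b1 - b1"
      unfolding gh b1_def by (simp add: Psi_add Psi_diff Psi_tau Psi_sig)
    hence a1b: "a1 = Tm q (1, 0) b1 - b1" using Psi_pole[OF da1 m] by simp
    have cP: "\<exists>k. coeff P i = to_fract [:k:]" for i
    proof -
      have "tau_x q (coeff P i) = coeff P i"
        using arg_cong[OF tauP, of "\<lambda>p. coeff p i"] q0
        by (simp add: Tm_def coeff_map_poly irh_0[OF tau_x_irh[OF q0]])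
      hence "tau_x q (coeff P i) = coeff P i + to_fract [:0:]" by simp
      thus ?thesis using tau_x_twist[OF q0 nr] by blast
    qed
    define L where "L = lead_coeff d"
    have L0: "L \<noteq> 0" unfolding L_def using d0 by simp
    have lL: "l = to_fract L" unfolding l_def L_def using coeffD degD by simp
    have cd: "\<exists>k. coeff d i = smult k L" for i
    proof -
      obtain k where k: "coeff P i = to_fract [:k:]" using cP by blast
      have "to_fract (coeff d i) = coeff D i" by (rule coeffD[symmetric])
      also have "\<dots> = l * coeff P i" unfolding DP by simp
      also have "\<dots> = to_fract (L * [:k:])" unfolding k lL by (rule to_fract_mult[symmetric])
      also have "L * [:k:] = smult k L" by simp
      finally have "to_fract (coeff d i) = to_fract (smult k L)" .
      thus ?thesis by (intro exI[of _ k]) simp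
    qed
    have "[:L:] dvd d" unfolding const_poly_dvd_iff
    proof
      fix n obtain k where "coeff d n = smult k L" using cd by blast
      thus "L dvd coeff d n" by (simp add: dvd_smult)
    qed
    then obtain d' where d': "d = [:L:] * d'" by (auto elim: dvdE)
    have "is_unit [:L:] \<or> is_unit d'" using irreducibleD[OF irrd d'] .
    moreover have "\<not> is_unit d'"
    proof
      assume "is_unit d'"
      hence "degree d' = 0" by (auto elim!: is_unit_polyE)
      hence "degree d = 0" using d' by simp
      thus False using dd by simp
    qed
    ultimately have "is_unit L" by (simp add: is_unit_const_poly_iff)
    hence dL: "degree L = 0" using L0 is_unit_iff_degree by blast
    have deg0: "\<forall>i. degree (coeff d i) = 0"
    proof
      fix i obtain k where "coeff d i = smult k L" using cd by blast
      thus "degree (coeff d i) = 0" using dL degree_smult_le[of k L] by simp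
    qed
    obtain L0c where L0c: "L = [:L0c:]" using dL by (rule degree_eq_zeroE)
    have taul: "tau_x q (l ^ m) = l ^ m"
      unfolding lL L0c by (simp add: irh_power[OF tau_x_irh[OF q0]] tau_x_const[OF q0])
    define b where "b = smult (l ^ m) b1"
    have "a = Tm q (1, 0) b - b"
      unfolding aa1 a1b b_def Tm_smult_tau[OF q0 taul] by (simp add: smult_diff_right)
    hence "to_fract a = DeltaX q (to_fract b)" unfolding DX by simp
    thus "(\<forall>i. degree (coeff d i) = 0) \<and> (\<exists>b. to_fract a = DeltaX q (to_fract b))"
      using deg0 by blast
  next
    assume R: "(\<forall>i. degree (coeff d i) = 0) \<and> (\<exists>b. to_fract a = DeltaX q (to_fract b))"
    then obtain b where b: "to_fract a = DeltaX q (to_fract b)" by blast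
    have ab: "a = Tm q (1, 0) b - b" using b unfolding DX by (simp only: to_fract_eq_iff)
    have "\<forall>i. \<exists>k. coeff D i = to_fract [:k:]"
    proof
      fix i
      have "coeff d i = [:coeff (coeff d i) 0:]" using R by (metis degree_eq_zeroE coeff_pCons_0)
      thus "\<exists>k. coeff D i = to_fract [:k:]" unfolding coeffD by metis
    qed
    hence TmD: "Tm q (1, 0) D = D" by (rule Tm_tau_const[OF q0])
    have "DeltaX q (Fract b (D ^ m)) = Fract a (D ^ m)"
      unfolding DeltaX_def tauK_TK TD TmD ab using D0 by (simp del: diff_fract add: Fract_diff_same)
    moreover have "DeltaY (0 :: 'a poly fract poly fract) = 0" unfolding DeltaY_def using irh_0[OF TK_irh[OF q0], of "(0, 1)"] sigK_TK[of q] by simp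
    ultimately have "to_fract a / to_fract (emb_xy d) ^ m = DeltaX q (Fract b (D ^ m)) + DeltaY 0"
      using f_eq by simp
    thus "exact q (to_fract a / to_fract (emb_xy d) ^ m)" unfolding exact_def by blast
  qed
qed

end
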